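(* In the supersample setting described in the context, assume the loss takes values in $[0,1]$. Then \[ \left|\mathrm{Err}\right| \leq\frac{2}{n}\sum_{i=1}^n\sqrt{2I(L^+_{i};U_i)}\leq \frac{2}{n}\sum_{i=1}^n\sqrt{2I(f_W(X^+_{i});U_i\mid\widetilde{Z})}. \]
   Context: Let $\mathcal Z=\mathcal X\times\mathcal Y$ and let $\mu$ be a distribution on $\mathcal Z$. A (possibly randomized) learning algorithm $\mathcal A$ maps a training sample in $\mathcal Z^n$ to a hypothesis $W\in\mathcal W$; each $w$ defines a predictor $f_w:\mathcal X\to\mathcal Y$, and the loss depends on $w$ only through the prediction, i.e. $\ell(w,(x,y))=\tilde\ell(f_w(x),y)$ for some function $\tilde\ell$. For $S=(Z_1,\dots,Z_n)\sim\mu^{n}$ and $W\sim P_{W|S}$, let $L_\mu=\mathbb E_W\mathbb E_{Z'\sim\mu}[\ell(W,Z')]$ (with $Z'$ independent of $(S,W)$), $L_n=\mathbb E_{W,S}[\frac1n\sum_i\ell(W,Z_i)]$, $\mathrm{Err}=L_\mu-L_n$. Supersample: $\widetilde Z=(\widetilde Z_{i,j})_{i\in\{1,\dots,n\},j\in\{0,1\}}$ with i.i.d. entries of law $\mu$; $U=(U_1,\dots,U_n)$ uniform on $\{0,1\}^n$, independent of $\widetilde Z$; $W=\mathcal A(\widetilde Z_U)$ with $\widetilde Z_U=(\widetilde Z_{1,U_1},\dots,\widetilde Z_{n,U_n})$. Write $\widetilde Z_{i,0}=(X_i^+,Y_i^+)$ and $L_i^+=\ell(W,\widetilde Z_{i,0})$.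 Mutual information is in nats. *)

theory Defs
  imports "HOL-Probability.Probability"
begin

definition loss :: "('w \<Rightarrow> 'x \<Rightarrow> 'p) \<Rightarrow> ('p \<Rightarrow> 'y \<Rightarrow> real) \<Rightarrow> 'w \<Rightarrow> 'x \<times> 'y \<Rightarrow> real" where
  "loss f lt w z = lt (f w (fst z)) (snd z)"

definition pop_risk :: "nat \<Rightarrow> ('x \<times> 'y) measure \<Rightarrow> ((nat \<Rightarrow> 'x \<times> 'y) \<Rightarrow> 'w measure)
    \<Rightarrow> ('w \<Rightarrow> 'x \<Rightarrow> 'p) \<Rightarrow> ('p \<Rightarrow> 'y \<Rightarrow> real) \<Rightarrow> real" where
  "pop_risk n \<mu> A f lt =
     (\<integral>s. (\<integral>w. (\<integral>z. loss f lt w z \<partial>\<mu>) \<partial>(A s)) \<partial>(PiM {..<n} (\<lambda>_. \<mu>)))"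

definition emp_risk :: "nat \<Rightarrow> ('x \<times> 'y) measure \<Rightarrow> ((nat \<Rightarrow> 'x \<times> 'y) \<Rightarrow> 'w measure)
    \<Rightarrow> ('w \<Rightarrow> 'x \<Rightarrow> 'p) \<Rightarrow> ('p \<Rightarrow> 'y \<Rightarrow> real) \<Rightarrow> real" where
  "emp_risk n \<mu> A f lt =
     (\<integral>s. (\<integral>w. (1 / real n) * (\<Sum>i<n. loss f lt w (s i)) \<partial>(A s)) \<partial>(PiM {..<n} (\<lambda>_. \<mu>)))"

definition gen_err :: "nat \<Rightarrow> ('x \<times> 'y) measure \<Rightarrow> ((nat \<Rightarrow> 'x \<times> 'y) \<Rightarrow> 'w measure)
    \<Rightarrow> ('w \<Rightarrow> 'x \<Rightarrow> 'p) \<Rightarrow> ('p \<Rightarrow> 'y \<Rightarrow> real) \<Rightarrow> real" where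
  "gen_err n \<mu> A f lt = pop_risk n \<mu> A f lt - emp_risk n \<mu> A f lt"

text \<open>Supersample: Ztilde indexed by (i,j) with i<n and j::bool (False = column 0, True = column 1),
  U uniform on {0,1}^n (n independent fair bits), W ~ A(Ztilde_U).\<close>
definition zt_space :: "nat \<Rightarrow> ('x \<times> 'y) measure \<Rightarrow> (nat \<times> bool \<Rightarrow> 'x \<times> 'y) measure" where
  "zt_space n \<mu> = PiM ({..<n} \<times> UNIV) (\<lambda>_. \<mu>)"

definition u_space :: "nat \<Rightarrow> (nat \<Rightarrow> bool) measure" where
  "u_space n = PiM {..<n} (\<lambda>_. measure_pmf (bernoulli_pmf (1/2)))"

definition select :: "nat \<Rightarrow> (nat \<times> bool \<Rightarrow> 'z) \<Rightarrow> (nat \<Rightarrow> bool) \<Rightarrow> nat \<Rightarrow> 'z" where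
  "select n zt u = (\<lambda>i\<in>{..<n}. zt (i, u i))"

definition supersample ::
  "nat \<Rightarrow> ('x \<times> 'y) measure \<Rightarrow> 'w measure \<Rightarrow> ((nat \<Rightarrow> 'x \<times> 'y) \<Rightarrow> 'w measure)
    \<Rightarrow> ((nat \<times> bool \<Rightarrow> 'x \<times> 'y) \<times> (nat \<Rightarrow> bool) \<times> 'w) measure" where
  "supersample n \<mu> MW A =
     bind (zt_space n \<mu>) (\<lambda>zt.
     bind (u_space n) (\<lambda>u.
     bind (A (select n zt u)) (\<lambda>w.
       return (zt_space n \<mu> \<Otimes>\<^sub>M u_space n \<Otimes>\<^sub>M MW) (zt, u, w))))"

end

theory Submission
  imports Defs
begin

lemma gibbs_pointwise:
  fixes p k :: real
  assumes "0 \<le> p" "0 \<le> k" "0 < p \<longrightarrow> 0 < k"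
  shows "p * ln k - p * ln p \<le> k - p"
proof (cases "p = 0")
  case True then show ?thesis using assms by simp
next
  case False
  then have pp: "0 < p" using assms by simp
  then have kp: "0 < k" using assms by simp
  have "ln (k / p) \<le> k / p - 1" using pp kp by (intro ln_le_minus_one) simp
  then have "p * ln (k/p) \<le> p * (k/p - 1)" using pp by (intro mult_left_mono) auto
  moreover have "ln (k/p) = ln k - ln p" using pp kp by (simp add: ln_div)
  ultimately show ?thesis using pp by (simp add: algebra_simps)
qed

lemma gibbs:
  fixes M :: "'a measure" and p k :: "'a \<Rightarrow> real"
  assumes p[measurable]: "p \<in> borel_measurable M" and k[measurable]: "k \<in> borel_measurable M"
    and p0: "\<And>x. 0 \<le> p x" and k0: "\<And>x. 0 \<le> k x"
    and ik: "integrable M k" and ip: "integrable M p"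
    and ilk: "integrable (density M (\<lambda>x. ennreal (p x))) (\<lambda>x. ln (k x))"
    and ilp: "integrable (density M (\<lambda>x. ennreal (p x))) (\<lambda>x. ln (p x))"
    and ae: "AE x in density M (\<lambda>x. ennreal (p x)). 0 < k x"
  shows "(\<integral>x. ln (k x) \<partial>density M (\<lambda>x. ennreal (p x))) - (\<integral>x. k x \<partial>M) + (\<integral>x. p x \<partial>M)
     \<le> (\<integral>x. ln (p x) \<partial>density M (\<lambda>x. ennreal (p x)))"
proof -
  let ?N = "density M (\<lambda>x. ennreal (p x))"
  have e1: "(\<integral>x. ln (k x) \<partial>?N) = (\<integral>x. p x * ln (k x) \<partial>M)"
    using p0 by (subst integral_density) auto
  have e2: "(\<integral>x. ln (p x) \<partial>?N) = (\<integral>x. p x * ln (p x) \<partial>M)"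
    using p0 by (subst integral_density) auto
  have i1: "integrable M (\<lambda>x. p x * ln (k x))"
    using ilk p0 by (subst (asm) integrable_density) auto
  have i2: "integrable M (\<lambda>x. p x * ln (p x))"
    using ilp p0 by (subst (asm) integrable_density) auto
  have ae2: "AE x in M. 0 < p x \<longrightarrow> 0 < k x"
    using ae by (subst (asm) AE_density) auto
  have "(\<integral>x. p x * ln (k x) - p x * ln (p x) \<partial>M) \<le> (\<integral>x. k x - p x \<partial>M)"
    using ae2 i1 i2 ik ip
    by (intro integral_mono_AE) (auto intro!: gibbs_pointwise p0 k0 elim!: eventually_mono)
  then show ?thesis using e1 e2 i1 i2 ik ip by (simp add: Bochner_Integration.integral_diff)
qed

lemma plnp_bound:
  fixes p :: real assumes "0 \<le> p" "p \<le> 2" shows "\<bar>p * ln p\<bar> \<le> 2"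
proof (cases "p = 0")
  case True then show ?thesis by simp
next
  case False
  then have pp: "0 < p" using assms by simp
  have a: "ln p \<le> p - 1" using pp by (rule ln_le_minus_one)
  have b: "1 - 1/p \<le> ln p"
  proof -
    have "ln (1/p) \<le> 1/p - 1" using pp by (intro ln_le_minus_one) simp
    then show ?thesis using pp by (simp add: ln_div)
  qed
  have c: "p * ln p \<le> p * (p - 1)" using a pp by (intro mult_left_mono) auto
  have d: "p * (1 - 1/p) \<le> p * ln p" using b pp by (intro mult_left_mono) auto
  have "p * (1 - 1/p) = p - 1" using pp by (simp add: field_simps)
  moreover have "p * (p - 1) \<le> 2"
  proof (cases "p \<le> 1")
    case True then have "p * (p - 1) \<le> 0" using assms by (simp add: mult_nonneg_nonpos)
    then show ?thesis by simp
  next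
    case False then have "p * (p - 1) \<le> 2 * 1" using assms by (intro mult_mono) auto
    then show ?thesis by simp
  qed
  ultimately have u: "p * ln p \<le> 2" "p - 1 \<le> p * ln p" using c d by linarith+
  then show ?thesis using assms by (simp add: abs_le_iff)
qed

lemma KLrep:
  fixes M N :: "'a measure"
  assumes fM: "finite_measure M" and pN: "prob_space N" and sN: "sets N = sets M"
    and dom: "\<And>C. C \<in> sets M \<Longrightarrow> emeasure N C \<le> 2 * emeasure M C"
  obtains p where "p \<in> borel_measurable M" "\<And>x. 0 \<le> p x" "\<And>x. p x \<le> 2"
    "N = density M (\<lambda>x. ennreal (p x))"
    "KL_divergence (exp 1) M N = (\<integral>x. ln (p x) \<partial>N)"
    "integrable N (\<lambda>x. ln (p x))"
proof -
  interpret M: finite_measure M by fact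
  interpret N: prob_space N by fact
  have ac: "absolutely_continuous M N"
    unfolding absolutely_continuous_def
  proof
    fix C assume "C \<in> null_sets M"
    then have "C \<in> sets M" "emeasure M C = 0" by auto
    then have "emeasure N C \<le> 0" using dom[of C] by simp
    then show "C \<in> null_sets N" using \<open>C \<in> sets M\<close> sN by (auto simp: null_sets_def)
  qed
  define r where "r = RN_deriv M N"
  have r[measurable]: "r \<in> borel_measurable M" unfolding r_def by simp
  have Nr: "density M r = N" unfolding r_def using ac sN by (rule M.density_RN_deriv)
  define A where "A = {x \<in> space M. 2 < r x}"
  have A[measurable]: "A \<in> sets M" unfolding A_def by measurable
  have "(\<integral>\<^sup>+x. r x * indicator A x \<partial>M) = (\<integral>\<^sup>+x. (r x - 2) * indicator A x + 2 * indicator A x \<partial>M)"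
  proof (intro nn_integral_cong)
    fix x assume "x \<in> space M"
    show "r x * indicator A x = (r x - 2) * indicator A x + 2 * indicator A x"
    proof (cases "x \<in> A")
      case True then have "2 \<le> r x" by (auto simp: A_def intro: less_imp_le)
      then have "r x - 2 + 2 = r x" by (rule diff_add_cancel_ennreal)
      then show ?thesis using True by simp
    qed simp
  qed
  also have "\<dots> = (\<integral>\<^sup>+x. (r x - 2) * indicator A x \<partial>M) + 2 * emeasure M A"
    by (subst nn_integral_add) (auto simp: nn_integral_cmult)
  finally have eq: "emeasure N A = (\<integral>\<^sup>+x. (r x - 2) * indicator A x \<partial>M) + 2 * emeasure M A"
    using Nr[symmetric] by (simp add: emeasure_density)
  have fin: "2 * emeasure M A \<noteq> \<infinity>" using M.emeasure_finite[of A] by (simp add: ennreal_mult_eq_top_iff)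
  have "(\<integral>\<^sup>+x. (r x - 2) * indicator A x \<partial>M) + 2 * emeasure M A \<le> 0 + 2 * emeasure M A"
    using eq dom[OF A] by simp
  then have "(\<integral>\<^sup>+x. (r x - 2) * indicator A x \<partial>M) \<le> 0"
    using fin by (simp add: add.commute[of _ "2 * emeasure M A"] ennreal_add_left_cancel_le)
  then have "(\<integral>\<^sup>+x. (r x - 2) * indicator A x \<partial>M) = 0" by simp
  then have "AE x in M. (r x - 2) * indicator A x = 0"
    by (subst (asm) nn_integral_0_iff_AE) auto
  then have aer: "AE x in M. r x \<le> 2"
  proof (rule AE_mp[OF _ AE_I2])
    fix x assume "x \<in> space M"
    show "(r x - 2) * indicator A x = 0 \<longrightarrow> r x \<le> 2"
    proof
    assume "(r x - 2) * indicator A x = 0"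
    then show "r x \<le> 2"
    proof (cases "x \<in> A")
      case True then have "r x - 2 = 0" using \<open>(r x - 2) * indicator A x = 0\<close> by simp
      then show ?thesis by (rule ennreal_minus_eq_0)
    next
      case False then show ?thesis using \<open>x \<in> space M\<close> by (auto simp: A_def)
    qed
    qed
  qed
  define p where "p x = min (enn2real (r x)) 2" for x
  have p[measurable]: "p \<in> borel_measurable M" unfolding p_def by measurable
  have p0: "0 \<le> p x" for x by (simp add: p_def)
  have p2: "p x \<le> 2" for x by (simp add: p_def)
  have aep: "AE x in M. ennreal (p x) = r x"
    using aer
  proof (rule eventually_mono)
    fix x assume "r x \<le> 2"
    then have "r x \<noteq> \<infinity>" by (auto simp: top_unique)
    then show "ennreal (p x) = r x" using \<open>r x \<le> 2\<close> unfolding p_def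
      by (cases "r x") (auto simp: min_def enn2real_ennreal ennreal_numeral[symmetric] simp del: ennreal_numeral)
  qed
  have Np: "N = density M (\<lambda>x. ennreal (p x))"
  proof -
    have "density M (\<lambda>x. ennreal (p x)) = density M r"
      by (rule density_cong) (use aep in auto)
    then show ?thesis using Nr by simp
  qed
  have aeN: "AE x in N. entropy_density (exp 1) M N x = ln (p x)"
  proof -
    have "AE x in M. entropy_density (exp 1) M N x = ln (p x)"
      using aep
    proof (rule eventually_mono)
      fix x assume "ennreal (p x) = r x"
      then show "entropy_density (exp 1) M N x = ln (p x)"
        unfolding entropy_density_def r_def[symmetric] using p0[of x]
        by (auto simp: log_def simp flip: \<open>ennreal (p x) = r x\<close>)
    qed
    then show ?thesis using ac absolutely_continuous_AE sN by blast
  qed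
  have int: "integrable N (\<lambda>x. ln (p x))"
  proof -
    have "integrable M (\<lambda>x. p x *\<^sub>R ln (p x))"
      by (intro M.integrable_const_bound[where B=2]) (auto intro!: plnp_bound p0 p2)
    then show ?thesis using Np p0 by (subst Np, subst integrable_density) auto
  qed
  have "KL_divergence (exp 1) M N = (\<integral>x. ln (p x) \<partial>N)"
    unfolding KL_divergence_def using aeN
    by (intro integral_cong_AE) (auto simp: measurable_cong_sets[OF sN refl])
  then show ?thesis using that p p0 p2 Np int by blast
qed

abbreviation Bh :: "bool measure" where "Bh \<equiv> measure_pmf (bernoulli_pmf (1/2))"

lemma two_inv: "(2::ennreal) * inverse 2 = 1"
proof -
  have a: "ennreal 2 * ennreal (inverse 2) = ennreal (2 * inverse 2)" by (rule ennreal_mult[symmetric]) auto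
  have b: "inverse (ennreal 2) = ennreal (inverse 2)" by (rule inverse_ennreal) auto
  have "(2::ennreal) * inverse 2 = ennreal 2 * inverse (ennreal 2)" by simp
  also have "\<dots> = 1" unfolding b a by simp
  finally show ?thesis .
qed
lemma inv2_add: "inverse 2 + inverse 2 = (1::ennreal)"
  using two_inv by (metis mult_2)
lemma emeasure_Bh: "emeasure (measure_pmf (bernoulli_pmf (1/2))) E = inverse 2 * indicator E True + inverse 2 * indicator E False"
proof -
  have "emeasure (measure_pmf (bernoulli_pmf (1/2))) E = (\<integral>\<^sup>+x. indicator E x \<partial>measure_pmf (bernoulli_pmf (1/2)))"
    by (subst nn_integral_indicator) auto
  also have "\<dots> = indicator E True * ennreal (1/2) + indicator E False * ennreal (1 - 1/2)"
    by (subst nn_integral_bernoulli_pmf) auto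
  finally show ?thesis by (simp add: mult.commute)
qed

lemma two_half_ennreal: "2 * (inverse 2 * a + inverse 2 * b) = (a::ennreal) + b"
  by (simp add: distrib_left mult.assoc[symmetric] two_inv)

lemma dom_VU:
  assumes P: "prob_space P" and X[measurable]: "X \<in> measurable P S"
    and Y[measurable]: "Y \<in> measurable P (count_space UNIV)"
    and BY: "distr P (count_space UNIV) Y = Bh"
    and C: "C \<in> sets (S \<Otimes>\<^sub>M count_space UNIV)"
  shows "emeasure (distr P (S \<Otimes>\<^sub>M count_space UNIV) (\<lambda>\<omega>. (X \<omega>, Y \<omega>))) C
    \<le> 2 * emeasure (distr P S X \<Otimes>\<^sub>M distr P (count_space UNIV) Y) C"
proof -
  interpret P: prob_space P by fact
  interpret B: prob_space Bh by (rule prob_space_measure_pmf)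
  define CT where "CT = {x \<in> space S. (x, True) \<in> C}"
  define CF where "CF = {x \<in> space S. (x, False) \<in> C}"
  have CT[measurable]: "CT \<in> sets S" unfolding CT_def using C by measurable
  have CF[measurable]: "CF \<in> sets S" unfolding CF_def using C by measurable
  have "emeasure (distr P (S \<Otimes>\<^sub>M count_space UNIV) (\<lambda>\<omega>. (X \<omega>, Y \<omega>))) C
      = emeasure P ((\<lambda>\<omega>. (X \<omega>, Y \<omega>)) -` C \<inter> space P)"
    using C by (subst emeasure_distr) auto
  also have "\<dots> \<le> emeasure P ((X -` CT \<inter> space P) \<union> (X -` CF \<inter> space P))"
  proof (intro emeasure_mono)
    show "(\<lambda>\<omega>. (X \<omega>, Y \<omega>)) -` C \<inter> space P \<subseteq> X -` CT \<inter> space P \<union> X -` CF \<inter> space P"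
      using measurable_space[OF X] by (auto simp: CT_def CF_def) (metis (full_types))
  qed measurable
  also have "\<dots> \<le> emeasure P (X -` CT \<inter> space P) + emeasure P (X -` CF \<inter> space P)"
    by (intro emeasure_subadditive) measurable
  also have "\<dots> = emeasure (distr P S X) CT + emeasure (distr P S X) CF"
    by (simp add: emeasure_distr)
  also have "\<dots> = 2 * (inverse 2 * emeasure (distr P S X) CT + inverse 2 * emeasure (distr P S X) CF)"
    by (rule two_half_ennreal[symmetric])
  also have "inverse 2 * emeasure (distr P S X) CT + inverse 2 * emeasure (distr P S X) CF
      = (\<integral>\<^sup>+x. inverse 2 * indicator CT x + inverse 2 * indicator CF x \<partial>distr P S X)"
    by (subst nn_integral_add) (auto simp: nn_integral_cmult)
  also have "\<dots> = (\<integral>\<^sup>+x. emeasure Bh (Pair x -` C) \<partial>distr P S X)"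
    by (intro nn_integral_cong) (auto simp: emeasure_Bh CT_def CF_def indicator_def)
  also have "\<dots> = emeasure (distr P S X \<Otimes>\<^sub>M Bh) C"
    using C by (subst measure_pmf.emeasure_pair_measure_alt) auto
  finally show ?thesis using BY by simp
qed

lemma dom_UV:
  assumes P: "prob_space P" and X[measurable]: "X \<in> measurable P S"
    and Y[measurable]: "Y \<in> measurable P (count_space UNIV)"
    and BY: "distr P (count_space UNIV) Y = Bh"
    and C: "C \<in> sets (count_space UNIV \<Otimes>\<^sub>M S)"
  shows "emeasure (distr P (count_space UNIV \<Otimes>\<^sub>M S) (\<lambda>\<omega>. (Y \<omega>, X \<omega>))) C
    \<le> 2 * emeasure (distr P (count_space UNIV) Y \<Otimes>\<^sub>M distr P S X) C"
proof -
  interpret P: prob_space P by fact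
  interpret B: prob_space Bh by (rule prob_space_measure_pmf)
  interpret Q: prob_space "distr P S X" by (rule P.prob_space_distr) simp
  define CT where "CT = {x \<in> space S. (True, x) \<in> C}"
  define CF where "CF = {x \<in> space S. (False, x) \<in> C}"
  have CT[measurable]: "CT \<in> sets S" unfolding CT_def using C by measurable
  have CF[measurable]: "CF \<in> sets S" unfolding CF_def using C by measurable
  have "emeasure (distr P (count_space UNIV \<Otimes>\<^sub>M S) (\<lambda>\<omega>. (Y \<omega>, X \<omega>))) C
      = emeasure P ((\<lambda>\<omega>. (Y \<omega>, X \<omega>)) -` C \<inter> space P)"
    using C by (subst emeasure_distr) auto
  also have "\<dots> \<le> emeasure P ((X -` CT \<inter> space P) \<union> (X -` CF \<inter> space P))"
  proof (intro emeasure_mono)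
    show "(\<lambda>\<omega>. (Y \<omega>, X \<omega>)) -` C \<inter> space P \<subseteq> X -` CT \<inter> space P \<union> X -` CF \<inter> space P"
      using measurable_space[OF X] by (auto simp: CT_def CF_def) (metis (full_types))
  qed measurable
  also have "\<dots> \<le> emeasure P (X -` CT \<inter> space P) + emeasure P (X -` CF \<inter> space P)"
    by (intro emeasure_subadditive) measurable
  also have "\<dots> = emeasure (distr P S X) CT + emeasure (distr P S X) CF"
    by (simp add: emeasure_distr)
  also have "\<dots> = 2 * (inverse 2 * emeasure (distr P S X) CT + inverse 2 * emeasure (distr P S X) CF)"
    by (rule two_half_ennreal[symmetric])
  also have "inverse 2 * emeasure (distr P S X) CT + inverse 2 * emeasure (distr P S X) CF
      = (\<integral>\<^sup>+b. emeasure (distr P S X) (Pair b -` C) \<partial>Bh)"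
  proof -
    have "Pair True -` C = CT" "Pair False -` C = CF"
      using sets.sets_into_space[OF C] by (auto simp: CT_def CF_def space_pair_measure)
    then show ?thesis by (subst nn_integral_bernoulli_pmf) (auto simp: mult.commute)
  qed
  also have "\<dots> = emeasure (Bh \<Otimes>\<^sub>M distr P S X) C"
    using C by (subst Q.emeasure_pair_measure_alt) auto
  finally show ?thesis using BY by simp
qed

lemma cosh_bound:
  fixes t :: real assumes "\<bar>t\<bar> \<le> 1" shows "exp t + exp (-t) \<le> 2 + 2 * t\<^sup>2"
proof -
  define a where "a = \<bar>t\<bar>"
  have a0: "0 \<le> a" "a \<le> 1" using assms by (auto simp: a_def)
  have eq: "exp t + exp (-t) = exp a + exp (-a)" by (cases "t \<ge> 0") (auto simp: a_def)
  have e1: "exp a \<le> 1 + a + a\<^sup>2" using a0 by (rule exp_bound)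
  have "1 \<le> (1 + a) * (1 - a + a\<^sup>2)" using a0 by (simp add: algebra_simps power2_eq_square power3_eq_cube)
  moreover have "1 + a \<le> exp a" by (rule exp_ge_add_one_self)
  moreover have "0 \<le> 1 - a + a\<^sup>2" using a0 by (simp add: power2_eq_square mult_right_le_one_le)
  ultimately have "1 \<le> exp a * (1 - a + a\<^sup>2)"
    using mult_right_mono[of "1 + a" "exp a" "1 - a + a\<^sup>2"] by linarith
  then have e2: "exp (-a) \<le> 1 - a + a\<^sup>2"
    by (simp add: exp_minus field_simps)
  have "t\<^sup>2 = a\<^sup>2" by (simp add: a_def)
  then show ?thesis using eq e1 e2 by simp
qed

definition sgnb :: "bool \<Rightarrow> real" where "sgnb b = (if b then 1 else -1)"
definition clip :: "real \<Rightarrow> real" where "clip x = max 0 (min 1 x)"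

lemma clip_bounds: "0 \<le> clip x" "clip x \<le> 1" by (auto simp: clip_def)
lemma clip_id: "0 \<le> x \<Longrightarrow> x \<le> 1 \<Longrightarrow> clip x = x" by (auto simp: clip_def)
lemma sgnb_abs[simp]: "\<bar>sgnb b\<bar> = 1" by (simp add: sgnb_def)
lemma sgnb_sq[simp]: "sgnb b * sgnb b = 1" by (simp add: sgnb_def)

lemma MI_lower:
  assumes P: "prob_space P" and L[measurable]: "L \<in> borel_measurable P"
    and L01: "\<And>\<omega>. \<omega> \<in> space P \<Longrightarrow> 0 \<le> L \<omega> \<and> L \<omega> \<le> 1"
    and Y[measurable]: "Y \<in> measurable P (count_space UNIV)"
    and BY: "distr P (count_space UNIV) Y = Bh"
  shows "(\<integral>\<omega>. (L \<omega> - 1/2) * sgnb (Y \<omega>) \<partial>P)\<^sup>2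
     \<le> prob_space.mutual_information P (exp 1) borel (count_space UNIV) L Y"
proof -
  interpret P: prob_space P by fact
  define D where "D = (\<integral>\<omega>. (L \<omega> - 1/2) * sgnb (Y \<omega>) \<partial>P)"
  define Q where "Q = distr P borel L"
  define M where "M = Q \<Otimes>\<^sub>M Bh"
  define N where "N = distr P (borel \<Otimes>\<^sub>M count_space UNIV) (\<lambda>\<omega>. (L \<omega>, Y \<omega>))"
  interpret Q: prob_space Q unfolding Q_def by (rule P.prob_space_distr) simp
  interpret QB: pair_prob_space Q Bh ..
  interpret M: prob_space M unfolding M_def by (rule QB.P.prob_space_axioms)
  interpret N: prob_space N unfolding N_def by (rule P.prob_space_distr) simp
  have sM: "sets M = sets (borel \<Otimes>\<^sub>M count_space UNIV)"
    unfolding M_def Q_def by (intro sets_pair_measure_cong) auto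
  have sN: "sets N = sets M" unfolding N_def sM by simp
  have MI: "P.mutual_information (exp 1) borel (count_space UNIV) L Y = KL_divergence (exp 1) M N"
    unfolding P.mutual_information_def M_def N_def Q_def BY ..
  have dom: "emeasure N C \<le> 2 * emeasure M C" if "C \<in> sets M" for C
    using dom_VU[OF P L Y BY, of C] that sM unfolding M_def N_def Q_def BY by simp
  obtain p where p[measurable]: "p \<in> borel_measurable M" and p0: "\<And>x. 0 \<le> p x" and p2: "\<And>x. p x \<le> 2"
    and Np: "N = density M (\<lambda>x. ennreal (p x))"
    and KL: "KL_divergence (exp 1) M N = (\<integral>x. ln (p x) \<partial>N)"
    and ilp: "integrable N (\<lambda>x. ln (p x))"
    using KLrep[OF _ _ sN dom] M.finite_measure_axioms N.prob_space_axioms by blast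
  have D_bnd: "\<bar>D\<bar> \<le> 1/2"
  proof -
    have "\<bar>D\<bar> \<le> (\<integral>\<omega>. \<bar>(L \<omega> - 1/2) * sgnb (Y \<omega>)\<bar> \<partial>P)"
      unfolding D_def by (rule integral_abs_bound)
    also have "\<dots> \<le> (\<integral>\<omega>. 1/2 \<partial>P)"
      by (intro integral_mono_AE' AE_I2) (auto simp: abs_mult dest!: L01 split: abs_split)
    finally show ?thesis by (simp add: P.prob_space)
  qed
  define lam where "lam = 2 * D"
  define k where "k z = exp (lam * (clip (fst z) - 1/2) * sgnb (snd z))" for z :: "real \<times> bool"
  have k[measurable]: "k \<in> borel_measurable M"
    unfolding k_def measurable_cong_sets[OF sM refl] clip_def sgnb_def by measurable
  have kb: "\<bar>k z\<bar> \<le> exp 1" for z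
  proof -
    have "\<bar>lam * (clip (fst z) - 1/2) * sgnb (snd z)\<bar> \<le> 1 * (1/2) * 1"
      unfolding abs_mult using D_bnd clip_bounds[of "fst z"] unfolding lam_def
      by (intro mult_mono) (auto split: abs_split)
    then show ?thesis unfolding k_def by auto
  qed
  have lnk: "ln (k z) = lam * (clip (fst z) - 1/2) * sgnb (snd z)" for z
    unfolding k_def by simp
  have ik: "integrable M k"
    by (intro M.integrable_const_bound[where B="exp 1"]) (use kb in auto)
  have ip: "integrable M p"
    by (intro M.integrable_const_bound[where B=2]) (use p0 p2 in auto)
  have lnkb: "\<bar>ln (k z)\<bar> \<le> \<bar>lam\<bar>" for z
  proof -
    have "\<bar>clip (fst z) - 1/2\<bar> \<le> 1" using clip_bounds[of "fst z"] by (auto split: abs_split)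
    then have "\<bar>lam\<bar> * \<bar>clip (fst z) - 1/2\<bar> \<le> \<bar>lam\<bar> * 1" by (intro mult_left_mono) auto
    then show ?thesis unfolding lnk abs_mult by simp
  qed
  have lnkm: "(\<lambda>x. ln (k x)) \<in> borel_measurable N"
    unfolding measurable_cong_sets[OF sN refl] using k by measurable
  have ilk: "integrable N (\<lambda>x. ln (k x))"
    by (intro N.integrable_const_bound[where B="\<bar>lam\<bar>"] AE_I2 lnkm) (simp add: lnkb)
  have G: "(\<integral>x. ln (k x) \<partial>N) - (\<integral>x. k x \<partial>M) + (\<integral>x. p x \<partial>M) \<le> (\<integral>x. ln (p x) \<partial>N)"
    using gibbs[OF p k p0 _ ik ip] ilk ilp Np by (simp add: k_def)
  have int_p: "(\<integral>x. p x \<partial>M) = 1"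
  proof -
    have "(\<integral>x. 1 \<partial>N) = (\<integral>x. p x *\<^sub>R (1::real) \<partial>M)"
      unfolding Np using p0 by (subst integral_density) auto
    then show ?thesis using N.prob_space by simp
  qed
  have int_lnk: "(\<integral>x. ln (k x) \<partial>N) = lam * D"
  proof -
    have "(\<integral>x. ln (k x) \<partial>N) = (\<integral>\<omega>. lam * (clip (L \<omega>) - 1/2) * sgnb (Y \<omega>) \<partial>P)"
      unfolding N_def lnk by (subst integral_distr) (auto simp: clip_def sgnb_def)
    also have "\<dots> = (\<integral>\<omega>. lam * ((L \<omega> - 1/2) * sgnb (Y \<omega>)) \<partial>P)"
      using L01 by (intro Bochner_Integration.integral_cong) (auto simp: clip_id)
    also have "\<dots> = lam * D" unfolding D_def by simp
    finally show ?thesis .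
  qed
  have int_k: "(\<integral>x. k x \<partial>M) \<le> 1 + lam\<^sup>2 / 4"
  proof -
    have "(\<integral>x. k x \<partial>M) = (\<integral>x. (\<integral>b. k (x, b) \<partial>Bh) \<partial>Q)"
      unfolding M_def using ik unfolding M_def by (intro QB.integral_fst'[symmetric])
    also have "\<dots> \<le> (\<integral>x. 1 + lam\<^sup>2 / 4 \<partial>Q)"
    proof (intro integral_mono)
      show "integrable Q (\<lambda>x. \<integral>b. k (x, b) \<partial>Bh)"
        using ik unfolding M_def by (rule QB.integrable_fst')
      fix x
      define t where "t = lam * (clip x - 1/2)"
      have tb: "\<bar>t\<bar> \<le> 1/2"
      proof -
        have "\<bar>t\<bar> \<le> 1 * (1/2)" unfolding t_def abs_mult using D_bnd clip_bounds[of x] unfolding lam_def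
          by (intro mult_mono) (auto split: abs_split)
        then show ?thesis by simp
      qed
      have "(\<integral>b. k (x, b) \<partial>Bh) = (exp t + exp (-t)) / 2"
        by (simp add: k_def sgnb_def t_def)
      also have "\<dots> \<le> (2 + 2 * t\<^sup>2) / 2"
        using cosh_bound[of t] tb by (intro divide_right_mono) auto
      also have "\<dots> \<le> 1 + lam\<^sup>2 / 4"
      proof -
        have "\<bar>clip x - 1/2\<bar> \<le> 1/2" using clip_bounds[of x] by (auto split: abs_split)
        then have "\<bar>t\<bar> \<le> \<bar>lam\<bar> * (1/2)" unfolding t_def abs_mult by (intro mult_left_mono) auto
        then have "\<bar>t\<bar>\<^sup>2 \<le> (\<bar>lam\<bar> * (1/2))\<^sup>2" by (intro power_mono) auto
        then have "t\<^sup>2 \<le> (\<bar>lam\<bar> * (1/2))\<^sup>2" by simp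
        also have "(\<bar>lam\<bar> * (1/2))\<^sup>2 = lam\<^sup>2 / 4" by (simp add: power_mult_distrib power_divide)
        finally show ?thesis by simp
      qed
      finally show "(\<integral>b. k (x, b) \<partial>Bh) \<le> 1 + lam\<^sup>2 / 4" .
    qed simp
    also have "\<dots> = 1 + lam\<^sup>2 / 4" by (simp add: Q.prob_space)
    finally show ?thesis .
  qed
  have "lam * D - (1 + lam\<^sup>2 / 4) + 1 \<le> KL_divergence (exp 1) M N"
    using G int_p int_lnk int_k KL by simp
  then have "D\<^sup>2 \<le> KL_divergence (exp 1) M N"
    unfolding lam_def by (simp add: power2_eq_square algebra_simps)
  then show ?thesis unfolding MI D_def .
qed

lemma MI_dpi:
  assumes P: "prob_space P" and V[measurable]: "V \<in> measurable P S"
    and Y[measurable]: "Y \<in> measurable P (count_space UNIV)"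
    and BY: "distr P (count_space UNIV) Y = Bh"
    and h[measurable]: "h \<in> borel_measurable S"
    and L[measurable]: "L \<in> borel_measurable P"
    and Lh: "\<And>\<omega>. \<omega> \<in> space P \<Longrightarrow> L \<omega> = h (V \<omega>)"
  shows "prob_space.mutual_information P (exp 1) borel (count_space UNIV) L Y
     \<le> prob_space.mutual_information P (exp 1) (count_space UNIV) S Y V"
proof -
  interpret P: prob_space P by fact
  define Q where "Q = distr P borel L"
  define PV where "PV = distr P S V"
  define M1 where "M1 = Q \<Otimes>\<^sub>M Bh"
  define J1 where "J1 = distr P (borel \<Otimes>\<^sub>M count_space UNIV) (\<lambda>\<omega>. (L \<omega>, Y \<omega>))"
  define M2 where "M2 = Bh \<Otimes>\<^sub>M PV"
  define J2 where "J2 = distr P (count_space UNIV \<Otimes>\<^sub>M S) (\<lambda>\<omega>. (Y \<omega>, V \<omega>))"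
  interpret Q: prob_space Q unfolding Q_def by (rule P.prob_space_distr) simp
  interpret PV: prob_space PV unfolding PV_def by (rule P.prob_space_distr) simp
  interpret QB: pair_prob_space Q Bh ..
  interpret BV: pair_prob_space Bh PV ..
  interpret VB: pair_prob_space PV Bh ..
  interpret M1: prob_space M1 unfolding M1_def by (rule QB.P.prob_space_axioms)
  interpret M2: prob_space M2 unfolding M2_def by (rule BV.P.prob_space_axioms)
  interpret J1: prob_space J1 unfolding J1_def by (rule P.prob_space_distr) simp
  interpret J2: prob_space J2 unfolding J2_def by (rule P.prob_space_distr) simp
  have sM1: "sets M1 = sets (borel \<Otimes>\<^sub>M count_space UNIV)"
    unfolding M1_def Q_def by (intro sets_pair_measure_cong) auto
  have sJ1: "sets J1 = sets M1" unfolding J1_def sM1 by simp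
  have sM2: "sets M2 = sets (count_space UNIV \<Otimes>\<^sub>M S)"
    unfolding M2_def PV_def by (intro sets_pair_measure_cong) auto
  have sJ2: "sets J2 = sets M2" unfolding J2_def sM2 by simp
  have MI1: "P.mutual_information (exp 1) borel (count_space UNIV) L Y = KL_divergence (exp 1) M1 J1"
    unfolding P.mutual_information_def M1_def J1_def Q_def BY ..
  have MI2: "P.mutual_information (exp 1) (count_space UNIV) S Y V = KL_divergence (exp 1) M2 J2"
    unfolding P.mutual_information_def M2_def J2_def PV_def BY ..
  have dom1: "emeasure J1 C \<le> 2 * emeasure M1 C" if "C \<in> sets M1" for C
    using dom_VU[OF P L Y BY, of C] that sM1 unfolding M1_def J1_def Q_def BY by simp
  have dom2: "emeasure J2 C \<le> 2 * emeasure M2 C" if "C \<in> sets M2" for C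
    using dom_UV[OF P V Y BY, of C] that sM2 unfolding M2_def J2_def PV_def BY by simp
  obtain q where q[measurable]: "q \<in> borel_measurable M1" and q0: "\<And>x. 0 \<le> q x" and q2: "\<And>x. q x \<le> 2"
    and J1q: "J1 = density M1 (\<lambda>x. ennreal (q x))"
    and KL1: "KL_divergence (exp 1) M1 J1 = (\<integral>x. ln (q x) \<partial>J1)"
    and ilq: "integrable J1 (\<lambda>x. ln (q x))"
    using KLrep[OF _ _ sJ1 dom1] M1.finite_measure_axioms J1.prob_space_axioms by blast
  obtain p where p[measurable]: "p \<in> borel_measurable M2" and p0: "\<And>x. 0 \<le> p x" and p2: "\<And>x. p x \<le> 2"
    and J2p: "J2 = density M2 (\<lambda>x. ennreal (p x))"
    and KL2: "KL_divergence (exp 1) M2 J2 = (\<integral>x. ln (p x) \<partial>J2)"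
    and ilp: "integrable J2 (\<lambda>x. ln (p x))"
    using KLrep[OF _ _ sJ2 dom2] M2.finite_measure_axioms J2.prob_space_axioms by blast
  define H where "H z = (h (snd z), fst z)" for z :: "bool \<times> _"
  have H[measurable]: "H \<in> measurable (count_space UNIV \<Otimes>\<^sub>M S) (borel \<Otimes>\<^sub>M count_space UNIV)"
    unfolding H_def by measurable
  have HM2: "H \<in> measurable M2 M1"
    using H by (simp add: measurable_cong_sets[OF sM2 sM1])
  have HJ2: "H \<in> measurable J2 M1"
    using H by (simp add: measurable_cong_sets[OF sJ2[unfolded sM2] sM1])
  have q'[measurable]: "q \<in> borel_measurable (borel \<Otimes>\<^sub>M count_space UNIV)"
    using q by (simp add: measurable_cong_sets[OF sM1 refl])
  have dJ: "distr J2 M1 H = J1"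
  proof -
    have "distr J2 M1 H = distr J2 (borel \<Otimes>\<^sub>M count_space UNIV) H"
      by (rule distr_cong) (auto simp: sM1)
    also have "\<dots> = distr P (borel \<Otimes>\<^sub>M count_space UNIV) (\<lambda>\<omega>. H (Y \<omega>, V \<omega>))"
      unfolding J2_def by (subst distr_distr) (auto simp: comp_def)
    also have "\<dots> = J1"
      unfolding J1_def by (rule distr_cong) (auto simp: H_def Lh)
    finally show ?thesis .
  qed
  have dM: "distr M2 M1 H = M1"
  proof -
    have "distr M2 M1 H = distr M2 (borel \<Otimes>\<^sub>M count_space UNIV) H"
      by (rule distr_cong) (auto simp: sM1)
    also have "\<dots> = distr (distr (PV \<Otimes>\<^sub>M Bh) (Bh \<Otimes>\<^sub>M PV) (\<lambda>(x, y). (y, x))) (borel \<Otimes>\<^sub>M count_space UNIV) H"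
      unfolding M2_def by (subst BV.distr_pair_swap) simp
    also have "\<dots> = distr (PV \<Otimes>\<^sub>M Bh) (borel \<Otimes>\<^sub>M count_space UNIV) (\<lambda>(v, b). (h v, b))"
    proof (subst distr_distr)
      show "H \<in> measurable (Bh \<Otimes>\<^sub>M PV) (borel \<Otimes>\<^sub>M count_space UNIV)"
        using H unfolding PV_def by (simp add: measurable_cong_sets[OF sets_pair_measure_cong[OF _ sets_distr] refl])
    qed (auto simp: comp_def H_def split_beta')
    also have "\<dots> = distr PV borel h \<Otimes>\<^sub>M distr Bh (count_space UNIV) (\<lambda>b. b)"
      by (subst pair_measure_distr) (auto simp: PV_def distr_id2 intro: prob_space_imp_sigma_finite prob_space_measure_pmf)
    also have "distr PV borel h = Q"
      unfolding PV_def Q_def by (subst distr_distr) (auto simp: comp_def Lh intro!: distr_cong)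
    also have "distr Bh (count_space UNIV) (\<lambda>b. b) = Bh"
      by (rule distr_id2) simp
    finally show ?thesis unfolding M1_def .
  qed
  define k where "k z = q (H z)" for z
  have k[measurable]: "k \<in> borel_measurable M2" unfolding k_def using HM2 q by measurable
  have k0: "0 \<le> k z" for z unfolding k_def by (rule q0)
  have ik: "integrable M2 k"
    by (intro M2.integrable_const_bound[where B=2]) (use q0 q2 in \<open>auto simp: k_def\<close>)
  have ip: "integrable M2 p"
    by (intro M2.integrable_const_bound[where B=2]) (use p0 p2 in auto)
  have ilk: "integrable J2 (\<lambda>x. ln (k x))"
  proof -
    have "integrable (distr J2 M1 H) (\<lambda>x. ln (q x))" using ilq dJ by simp
    then show ?thesis unfolding k_def using HJ2 by (subst (asm) integrable_distr_eq) auto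
  qed
  have aek: "AE x in J2. 0 < k x"
  proof -
    have "AE x in J1. 0 < q x" unfolding J1q using q0
      by (subst AE_density) (auto intro!: AE_I2)
    then have "AE x in distr J2 M1 H. 0 < q x" unfolding dJ .
    then show ?thesis unfolding k_def using HJ2 by (subst (asm) AE_distr_iff) auto
  qed
  have G: "(\<integral>x. ln (k x) \<partial>J2) - (\<integral>x. k x \<partial>M2) + (\<integral>x. p x \<partial>M2) \<le> (\<integral>x. ln (p x) \<partial>J2)"
    using gibbs[OF p k p0 k0 ik ip ilk[unfolded J2p] ilp[unfolded J2p] aek[unfolded J2p], folded J2p] .
  have int_p: "(\<integral>x. p x \<partial>M2) = 1"
  proof -
    have "(\<integral>x. 1 \<partial>J2) = (\<integral>x. p x *\<^sub>R (1::real) \<partial>M2)"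
      unfolding J2p using p0 by (subst integral_density) auto
    then show ?thesis using J2.prob_space by simp
  qed
  have int_k: "(\<integral>x. k x \<partial>M2) = 1"
  proof -
    have "(\<integral>x. k x \<partial>M2) = (\<integral>x. q x \<partial>distr M2 M1 H)"
      unfolding k_def using HM2 by (subst integral_distr) auto
    also have "\<dots> = (\<integral>x. q x \<partial>M1)" using dM by simp
    also have "\<dots> = (\<integral>x. 1 \<partial>J1)"
      unfolding J1q using q0 by (subst integral_density) auto
    also have "\<dots> = 1" using J1.prob_space by simp
    finally show ?thesis .
  qed
  have int_lnk: "(\<integral>x. ln (k x) \<partial>J2) = (\<integral>x. ln (q x) \<partial>J1)"
  proof -
    have "(\<integral>x. ln (k x) \<partial>J2) = (\<integral>x. ln (q x) \<partial>distr J2 M1 H)"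
      unfolding k_def using HJ2 by (subst integral_distr) auto
    then show ?thesis using dJ by simp
  qed
  show ?thesis unfolding MI1 MI2 KL1 KL2 using G int_p int_k int_lnk by simp
qed

lemma MI_indep_zero:
  assumes P: "prob_space P" and Y[measurable]: "Y \<in> measurable P S" and Z[measurable]: "Z \<in> measurable P T"
    and ind: "distr P (S \<Otimes>\<^sub>M T) (\<lambda>\<omega>. (Y \<omega>, Z \<omega>)) = distr P S Y \<Otimes>\<^sub>M distr P T Z"
  shows "prob_space.mutual_information P b S T Y Z = 0"
proof -
  interpret P: prob_space P by fact
  interpret A: prob_space "distr P S Y" by (rule P.prob_space_distr) simp
  interpret B: prob_space "distr P T Z" by (rule P.prob_space_distr) simp
  interpret AB: pair_prob_space "distr P S Y" "distr P T Z" ..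
  show ?thesis unfolding P.mutual_information_def ind by (rule AB.KL_same_eq_0)
qed

lemma integral_bind_bdd:
  fixes f :: "_ \<Rightarrow> real"
  assumes K[measurable]: "K \<in> measurable M (subprob_algebra N)"
    and f[measurable]: "f \<in> borel_measurable N"
    and fb: "\<And>x. x \<in> space N \<Longrightarrow> \<bar>f x\<bar> \<le> B"
    and fin: "finite_measure M" and ne: "space M \<noteq> {}"
  shows "integral\<^sup>L (M \<bind> K) f = (\<integral>x. integral\<^sup>L (K x) f \<partial>M)"
proof -
  interpret finite_measure M by fact
  have "integral\<^sup>L (M \<bind> K) f = integral\<^sup>L (join (distr M (subprob_algebra N) K)) f"
    by (simp add: bind_nonempty''[OF K ne])
  also have "\<dots> = (\<integral>M'. integral\<^sup>L M' f \<partial>distr M (subprob_algebra N) K)"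
  proof (rule integral_join[OF f fb])
    show "finite_measure (distr M (subprob_algebra N) K)" by (rule finite_measure_distr) simp
    show "AE M' in distr M (subprob_algebra N) K. emeasure M' (space M') \<le> ennreal 1"
      by (subst AE_distr_iff) (auto intro!: AE_I2 subprob_space.emeasure_space_le_1 subprob_space_kernel[OF K])
  qed simp_all
  also have "\<dots> = (\<integral>x. integral\<^sup>L (K x) f \<partial>M)"
    by (subst integral_distr) simp_all
  finally show ?thesis .
qed

lemma integral_measurable_kernel:
  fixes f :: "_ \<Rightarrow> _ \<Rightarrow> real"
  assumes f: "(\<lambda>(x, y). f x y) \<in> borel_measurable (M \<Otimes>\<^sub>M N)"
    and L: "L \<in> measurable M (subprob_algebra N)" and ne: "space N \<noteq> {}"
  shows "(\<lambda>x. \<integral>y. f x y \<partial>L x) \<in> borel_measurable M"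
proof -
  define L' where "L' x = bind (L x) (\<lambda>y. return (M \<Otimes>\<^sub>M N) (x, y))" for x
  have r: "(\<lambda>z. return (M \<Otimes>\<^sub>M N) (fst z, snd z)) \<in> measurable (M \<Otimes>\<^sub>M N) (subprob_algebra (M \<Otimes>\<^sub>M N))"
    using return_measurable[of "M \<Otimes>\<^sub>M N"] by (simp add: measurable_def)
  have L': "L' \<in> measurable M (subprob_algebra (M \<Otimes>\<^sub>M N))"
    unfolding L'_def by (rule measurable_bind[OF L r])
  have m: "(\<lambda>x. integral\<^sup>L (L' x) (\<lambda>(x, y). f x y)) \<in> borel_measurable M"
    by (rule measurable_compose[OF L' integral_measurable_subprob_algebra[OF f]])
  have eq: "integral\<^sup>L (L' x) (\<lambda>(x, y). f x y) = (\<integral>y. f x y \<partial>L x)" if x: "x \<in> space M" for x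
  proof -
    have sL: "sets (L x) = sets N" using L x by (rule subprob_measurableD)
    have spL: "space (L x) = space N" using L x by (rule subprob_measurableD)
    have mp: "(\<lambda>y. (x, y)) \<in> measurable (L x) (M \<Otimes>\<^sub>M N)"
      using measurable_Pair1'[OF x, of N] by (simp add: measurable_cong_sets[OF sL refl])
    have "L' x = distr (L x) (M \<Otimes>\<^sub>M N) (\<lambda>y. (x, y))"
      unfolding L'_def using ne spL by (intro bind_return_distr' mp) auto
    then have "integral\<^sup>L (L' x) (\<lambda>(x, y). f x y) = (\<integral>y. (\<lambda>(x, y). f x y) (x, y) \<partial>L x)"
      using mp f by (simp add: integral_distr)
    then show ?thesis by simp
  qed
  show ?thesis using m measurable_cong[of M "\<lambda>x. integral\<^sup>L (L' x) (\<lambda>(x, y). f x y)" "\<lambda>x. \<integral>y. f x y \<partial>L x" borel] eq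
    by blast
qed

locale setting =
  fixes n :: nat
    and \<mu> :: "('x \<times> 'y) measure"
    and MX :: "'x measure" and MY :: "'y measure"
    and MW :: "'w measure" and MP :: "'p measure"
    and A :: "(nat \<Rightarrow> 'x \<times> 'y) \<Rightarrow> 'w measure"
    and f :: "'w \<Rightarrow> 'x \<Rightarrow> 'p"
    and lt :: "'p \<Rightarrow> 'y \<Rightarrow> real"
  assumes n_pos: "0 < n"
    and mu_prob: "prob_space \<mu>"
    and mu_sets: "sets \<mu> = sets (MX \<Otimes>\<^sub>M MY)"
    and f_meas: "(\<lambda>(w, x). f w x) \<in> measurable (MW \<Otimes>\<^sub>M MX) MP"
    and lt_meas: "(\<lambda>(p, y). lt p y) \<in> borel_measurable (MP \<Otimes>\<^sub>M MY)"
    and A_kernel: "A \<in> measurable (PiM {..<n} (\<lambda>_. \<mu>)) (subprob_algebra MW)"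
    and A_prob: "\<forall>s \<in> space (PiM {..<n} (\<lambda>_. \<mu>)). prob_space (A s)"
    and loss_01: "\<forall>w \<in> space MW. \<forall>z \<in> space \<mu>. 0 \<le> loss f lt w z \<and> loss f lt w z \<le> 1"
begin

abbreviation "PS \<equiv> PiM {..<n} (\<lambda>_. \<mu>)"
abbreviation "Zs \<equiv> zt_space n \<mu>"
abbreviation "Us \<equiv> u_space n"
abbreviation "\<Omega> \<equiv> Zs \<Otimes>\<^sub>M Us \<Otimes>\<^sub>M MW"
abbreviation "SS \<equiv> supersample n \<mu> MW A"

lemma A_meas[measurable]: "A \<in> measurable PS (subprob_algebra MW)" by (rule A_kernel)

lemma fst_meas_mu: "fst \<in> measurable \<mu> MX"
  by (simp add: measurable_cong_sets[OF mu_sets refl])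
lemma snd_meas_mu: "snd \<in> measurable \<mu> MY"
  by (simp add: measurable_cong_sets[OF mu_sets refl])

lemma F_meas[measurable]:
  assumes [measurable]: "g \<in> measurable N MW" "h \<in> measurable N MX"
  shows "(\<lambda>x. f (g x) (h x)) \<in> measurable N MP"
  using measurable_compose[OF _ f_meas, of "\<lambda>x. (g x, h x)"] by simp

lemma lt_meas'[measurable]:
  assumes [measurable]: "g \<in> measurable N MP" "h \<in> measurable N MY"
  shows "(\<lambda>x. lt (g x) (h x)) \<in> borel_measurable N"
  using measurable_compose[OF _ lt_meas, of "\<lambda>x. (g x, h x)"] by simp

lemma loss_meas[measurable]:
  assumes [measurable]: "g \<in> measurable N MW" "h \<in> measurable N \<mu>"
  shows "(\<lambda>x. loss f lt (g x) (h x)) \<in> borel_measurable N"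
proof -
  have a: "(\<lambda>x. f (g x) (fst (h x))) \<in> measurable N MP"
    by (rule F_meas) (simp_all add: measurable_compose[OF assms(2) fst_meas_mu])
  have b: "(\<lambda>x. snd (h x)) \<in> measurable N MY"
    by (rule measurable_compose[OF assms(2) snd_meas_mu])
  show ?thesis unfolding loss_def by (rule lt_meas'[OF a b])
qed

lemma mu: "prob_space \<mu>" by (rule mu_prob)

lemma Zs_prob: "prob_space Zs"
  unfolding zt_space_def by (intro prob_space_PiM mu)
lemma Us_prob: "prob_space Us"
  unfolding u_space_def by (intro prob_space_PiM prob_space_measure_pmf)
lemma PS_prob: "prob_space PS" by (intro prob_space_PiM mu)

lemma zt_comp[measurable]: "i < n \<Longrightarrow> (\<lambda>zt. zt (i, b)) \<in> measurable Zs \<mu>"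
  unfolding zt_space_def by (rule measurable_component_singleton) auto

lemma u_comp[measurable]: "i < n \<Longrightarrow> (\<lambda>u. u i) \<in> measurable Us (count_space UNIV)"
proof -
  assume "i < n"
  then have "(\<lambda>u. u i) \<in> measurable Us (measure_pmf (bernoulli_pmf (1/2)))"
    unfolding u_space_def by (intro measurable_component_singleton) auto
  moreover have "sets (measure_pmf (bernoulli_pmf (1/2))) = sets (count_space (UNIV::bool set))" by simp
  ultimately show ?thesis by (subst (asm) measurable_cong_sets[OF refl]) auto
qed

lemma select_meas[measurable]: "(\<lambda>x. select n (fst x) (snd x)) \<in> measurable (Zs \<Otimes>\<^sub>M Us) PS"
proof -
  have "(\<lambda>x. \<lambda>i\<in>{..<n}. if snd x i then fst x (i, True) else fst x (i, False)) \<in> measurable (Zs \<Otimes>\<^sub>M Us) PS"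
    by (intro measurable_restrict) measurable
  moreover have "(\<lambda>i\<in>{..<n}. if snd x i then fst x (i, True) else fst x (i, False)) = select n (fst x) (snd x)" for x :: "(nat \<times> bool \<Rightarrow> 'x \<times> 'y) \<times> (nat \<Rightarrow> bool)"
    unfolding select_def by (intro restrict_ext) auto
  ultimately show ?thesis by simp
qed

lemma select_space: "zt \<in> space Zs \<Longrightarrow> select n zt u \<in> space PS"
  unfolding select_def zt_space_def by (auto simp: space_PiM PiE_iff)

lemma A_prob': "zt \<in> space Zs \<Longrightarrow> prob_space (A (select n zt u))"
  using A_prob select_space by blast

lemma sets_A: "s \<in> space PS \<Longrightarrow> sets (A s) = sets MW"
  using A_meas by (rule subprob_measurableD)
lemma space_A: "s \<in> space PS \<Longrightarrow> space (A s) = space MW"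
  using A_meas by (rule subprob_measurableD)

lemma MW_ne: "space MW \<noteq> {}"
proof -
  interpret PS: prob_space PS by (rule PS_prob)
  obtain s where s: "s \<in> space PS" using PS.not_empty by blast
  interpret prob_space "A s" using A_prob s by blast
  show ?thesis using not_empty space_A[OF s] by simp
qed

definition K2 where "K2 zt u = bind (A (select n zt u)) (\<lambda>w. return \<Omega> (zt, u, w))"

lemma K2_meas[measurable]: "(\<lambda>x. K2 (fst x) (snd x)) \<in> measurable (Zs \<Otimes>\<^sub>M Us) (subprob_algebra \<Omega>)"
  unfolding K2_def
proof (rule measurable_bind)
  show "(\<lambda>x. A (select n (fst x) (snd x))) \<in> measurable (Zs \<Otimes>\<^sub>M Us) (subprob_algebra MW)"
    by (rule measurable_compose[OF select_meas A_meas])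
  have "(\<lambda>y. (fst (fst y), snd (fst y), snd y)) \<in> measurable ((Zs \<Otimes>\<^sub>M Us) \<Otimes>\<^sub>M MW) \<Omega>"
    by measurable
  then show "(\<lambda>x. return \<Omega> (fst (fst x), snd (fst x), snd x)) \<in> measurable ((Zs \<Otimes>\<^sub>M Us) \<Otimes>\<^sub>M MW) (subprob_algebra \<Omega>)"
    by (rule measurable_compose[OF _ return_measurable])
qed

lemma K1_meas[measurable]: "(\<lambda>zt. bind Us (K2 zt)) \<in> measurable Zs (subprob_algebra \<Omega>)"
proof -
  have "Us \<in> space (subprob_algebra Us)"
    using Us_prob by (auto simp: space_subprob_algebra prob_space_imp_subprob_space)
  then show ?thesis
    by (rule measurable_bind[OF measurable_const K2_meas])
qed

lemma SS_def': "SS = bind Zs (\<lambda>zt. bind Us (K2 zt))"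
  unfolding supersample_def K2_def by (rule refl)

end

context setting begin

lemma Zs_ne: "space Zs \<noteq> {}" using prob_space.not_empty[OF Zs_prob] .
lemma Us_ne: "space Us \<noteq> {}" using prob_space.not_empty[OF Us_prob] .

lemma K2_zt: "zt \<in> space Zs \<Longrightarrow> K2 zt \<in> measurable Us (subprob_algebra \<Omega>)"
  using measurable_Pair2[OF K2_meas[unfolded split_beta'[symmetric]]] by simp

lemma K2_eq: assumes zt: "zt \<in> space Zs" and u: "u \<in> space Us"
  shows "K2 zt u = distr (A (select n zt u)) \<Omega> (\<lambda>w. (zt, u, w))"
proof -
  have s: "select n zt u \<in> space PS" using zt by (rule select_space)
  interpret prob_space "A (select n zt u)" using A_prob s by blast
  have m: "(\<lambda>w. (zt, u, w)) \<in> measurable (A (select n zt u)) \<Omega>"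
    using zt u by (simp add: measurable_cong_sets[OF sets_A[OF s] refl])
  show ?thesis unfolding K2_def using not_empty m by (rule bind_return_distr')
qed

lemma SS_prob: "prob_space SS"
proof -
  interpret Z: prob_space Zs by (rule Zs_prob)
  interpret U: prob_space Us by (rule Us_prob)
  have "prob_space (bind Us (K2 zt))" if zt: "zt \<in> space Zs" for zt
  proof (rule U.prob_space_bind[OF _ K2_zt[OF zt]])
    show "AE u in Us. prob_space (K2 zt u)"
    proof (rule AE_I2)
      fix u assume u: "u \<in> space Us"
      interpret prob_space "A (select n zt u)" using A_prob' zt by blast
      show "prob_space (K2 zt u)" unfolding K2_eq[OF zt u] by (rule prob_space_distr) (use zt u in \<open>simp add: measurable_cong_sets[OF sets_A[OF select_space[OF zt]] refl]\<close>)
    qed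
  qed
  then show ?thesis unfolding SS_def' by (intro Z.prob_space_bind[OF _ K1_meas] AE_I2)
qed

lemma sets_SS: "sets SS = sets \<Omega>"
proof -
  have h: "sets (bind Us (K2 zt)) = sets \<Omega>" if zt: "zt \<in> space Zs" for zt
    by (rule sets_bind[OF sets_kernel[OF K2_zt[OF zt]] Us_ne])
  show ?thesis unfolding SS_def' by (rule sets_bind[OF h Zs_ne])
qed

lemma space_SS: "space SS = space \<Omega>" using sets_SS by (rule sets_eq_imp_space_eq)

lemma meas_SS: "measurable SS N = measurable \<Omega> N"
  using sets_SS by (rule measurable_cong_sets) simp

lemma SS_integral:
  fixes g :: "_ \<Rightarrow> real"
  assumes g[measurable]: "g \<in> borel_measurable \<Omega>" and gb: "\<And>x. x \<in> space \<Omega> \<Longrightarrow> \<bar>g x\<bar> \<le> B"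
  shows "integral\<^sup>L SS g = (\<integral>zt. (\<integral>u. (\<integral>w. g (zt, u, w) \<partial>A (select n zt u)) \<partial>Us) \<partial>Zs)"
proof -
  interpret Z: prob_space Zs by (rule Zs_prob)
  interpret U: prob_space Us by (rule Us_prob)
  have "integral\<^sup>L SS g = (\<integral>zt. integral\<^sup>L (bind Us (K2 zt)) g \<partial>Zs)"
    unfolding SS_def' using Zs_ne by (intro integral_bind_bdd[OF K1_meas g gb]) auto
  also have "\<dots> = (\<integral>zt. (\<integral>u. (\<integral>w. g (zt, u, w) \<partial>A (select n zt u)) \<partial>Us) \<partial>Zs)"
  proof (intro Bochner_Integration.integral_cong refl)
    fix zt assume zt: "zt \<in> space Zs"
    have "integral\<^sup>L (bind Us (K2 zt)) g = (\<integral>u. integral\<^sup>L (K2 zt u) g \<partial>Us)"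
      using Us_ne by (intro integral_bind_bdd[OF K2_zt[OF zt] g gb]) auto
    also have "\<dots> = (\<integral>u. (\<integral>w. g (zt, u, w) \<partial>A (select n zt u)) \<partial>Us)"
    proof (intro Bochner_Integration.integral_cong refl)
      fix u assume u: "u \<in> space Us"
      have m: "(\<lambda>w. (zt, u, w)) \<in> measurable (A (select n zt u)) \<Omega>"
        using zt u by (simp add: measurable_cong_sets[OF sets_A[OF select_space[OF zt]] refl])
      show "integral\<^sup>L (K2 zt u) g = (\<integral>w. g (zt, u, w) \<partial>A (select n zt u))"
        unfolding K2_eq[OF zt u] using m by (simp add: integral_distr)
    qed
    finally show "integral\<^sup>L (bind Us (K2 zt)) g = (\<integral>u. (\<integral>w. g (zt, u, w) \<partial>A (select n zt u)) \<partial>Us)" .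
  qed
  finally show ?thesis .
qed

lemma SS_distr_nw:
  assumes phi[measurable]: "\<phi> \<in> measurable \<Omega> R"
    and psi: "\<And>zt u w. \<phi> (zt, u, w) = \<psi> zt u"
  shows "distr SS R \<phi> = bind Zs (\<lambda>zt. distr Us R (\<psi> zt))"
proof -
  have "distr SS R \<phi> = bind Zs (\<lambda>zt. distr (bind Us (K2 zt)) R \<phi>)"
    unfolding SS_def' using Zs_ne by (intro distr_bind[OF K1_meas] phi) auto
  also have "\<dots> = bind Zs (\<lambda>zt. distr Us R (\<psi> zt))"
  proof (intro bind_cong refl)
    fix zt assume zt: "zt \<in> space Zs"
    have "distr (bind Us (K2 zt)) R \<phi> = bind Us (\<lambda>u. distr (K2 zt u) R \<phi>)"
      using Us_ne by (intro distr_bind[OF K2_zt[OF zt]] phi) auto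
    also have "\<dots> = bind Us (\<lambda>u. return R (\<psi> zt u))"
    proof (intro bind_cong refl)
      fix u assume u: "u \<in> space Us"
      interpret prob_space "A (select n zt u)" using A_prob' zt by blast
      have m: "(\<lambda>w. (zt, u, w)) \<in> measurable (A (select n zt u)) \<Omega>"
        using zt u by (simp add: measurable_cong_sets[OF sets_A[OF select_space[OF zt]] refl])
      have "distr (K2 zt u) R \<phi> = distr (A (select n zt u)) R (\<lambda>w. \<psi> zt u)"
        unfolding K2_eq[OF zt u] using m by (subst distr_distr) (auto simp: comp_def psi)
      also have "\<dots> = return R (\<psi> zt u)"
      proof (rule distr_const)
        obtain w where w: "w \<in> space MW" using MW_ne by blast
        have "(zt, u, w) \<in> space \<Omega>" using zt u w by (simp add: space_pair_measure)
        then show "\<psi> zt u \<in> space R" using measurable_space[OF phi] psi by metis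
      qed
      finally show "distr (K2 zt u) R \<phi> = return R (\<psi> zt u)" .
    qed
    also have "\<dots> = distr Us R (\<psi> zt)"
    proof (rule bind_return_distr'[OF Us_ne])
      obtain w where w: "w \<in> space MW" using MW_ne by blast
      have "(\<lambda>u. \<phi> (zt, u, w)) \<in> measurable Us R" using zt w by measurable
      then show "\<psi> zt \<in> measurable Us R" using psi by simp
    qed
    finally show "distr (bind Us (K2 zt)) R \<phi> = distr Us R (\<psi> zt)" .
  qed
  finally show ?thesis .
qed

lemma U_law_Us: "i < n \<Longrightarrow> distr Us (count_space UNIV) (\<lambda>u. u i) = Bh"
proof -
  assume i: "i < n"
  have "distr Us (count_space UNIV) (\<lambda>u. u i) = distr Us (measure_pmf (bernoulli_pmf (1/2))) (\<lambda>u. u i)"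
    by (rule distr_cong) auto
  also have "\<dots> = Bh" unfolding u_space_def using i
    by (intro distr_PiM_component prob_space_measure_pmf) auto
  finally show ?thesis .
qed

lemma U_law: "i < n \<Longrightarrow> distr SS (count_space UNIV) (\<lambda>(zt, u, w). u i) = Bh"
proof -
  assume i: "i < n"
  interpret Z: prob_space Zs by (rule Zs_prob)
  interpret U: prob_space Us by (rule Us_prob)
  have "distr SS (count_space UNIV) (\<lambda>(zt, u, w). u i) = bind Zs (\<lambda>zt. distr Us (count_space UNIV) (\<lambda>u. u i))"
    using i by (intro SS_distr_nw) auto
  also have "\<dots> = distr Us (count_space UNIV) (\<lambda>u. u i)"
    by (rule bind_const') (auto intro!: prob_space_imp_subprob_space U.prob_space_distr u_comp i Zs_prob)
  finally show ?thesis using U_law_Us[OF i] by simp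
qed

end

context setting begin

lemma UZ_indep:
  assumes i: "i < n"
  shows "distr SS (count_space UNIV \<Otimes>\<^sub>M Zs) (\<lambda>(zt, u, w). (u i, zt))
    = distr SS (count_space UNIV) (\<lambda>(zt, u, w). u i) \<Otimes>\<^sub>M distr SS Zs (\<lambda>(zt, u, w). zt)"
proof -
  interpret Z: prob_space Zs by (rule Zs_prob)
  interpret U: prob_space Us by (rule Us_prob)
  interpret BZ: pair_prob_space Bh Zs ..
  have Zd: "distr SS Zs (\<lambda>(zt, u, w). zt) = Zs"
  proof -
    have "distr SS Zs (\<lambda>(zt, u, w). zt) = bind Zs (\<lambda>zt. distr Us Zs (\<lambda>u. zt))"
      by (intro SS_distr_nw) auto
    also have "\<dots> = bind Zs (\<lambda>zt. return Zs zt)"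
      by (intro bind_cong refl U.distr_const)
    also have "\<dots> = Zs" by (rule bind_return')
    finally show ?thesis .
  qed
  have Us_sp: "Us \<in> space (subprob_algebra Us)"
    using Us_prob by (auto simp: space_subprob_algebra prob_space_imp_subprob_space)
  have kern: "(\<lambda>zt. distr Us (count_space UNIV \<Otimes>\<^sub>M Zs) (\<lambda>u. (u i, zt))) \<in> measurable Zs (subprob_algebra (count_space UNIV \<Otimes>\<^sub>M Zs))"
  proof (rule measurable_distr2[where M=Us])
    show "(\<lambda>(zt, u). (u i, zt)) \<in> measurable (Zs \<Otimes>\<^sub>M Us) (count_space UNIV \<Otimes>\<^sub>M Zs)"
      using i by measurable
  qed (rule measurable_const[OF Us_sp])
  have J: "distr SS (count_space UNIV \<Otimes>\<^sub>M Zs) (\<lambda>(zt, u, w). (u i, zt))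
      = bind Zs (\<lambda>zt. distr Us (count_space UNIV \<Otimes>\<^sub>M Zs) (\<lambda>u. (u i, zt)))"
    using i by (intro SS_distr_nw) auto
  have "bind Zs (\<lambda>zt. distr Us (count_space UNIV \<Otimes>\<^sub>M Zs) (\<lambda>u. (u i, zt))) = Bh \<Otimes>\<^sub>M Zs"
  proof (rule measure_eqI)
    have "sets (bind Zs (\<lambda>zt. distr Us (count_space UNIV \<Otimes>\<^sub>M Zs) (\<lambda>u. (u i, zt)))) = sets (count_space UNIV \<Otimes>\<^sub>M Zs)"
      by (rule sets_bind[OF _ Zs_ne]) simp
    also have "\<dots> = sets (Bh \<Otimes>\<^sub>M Zs)" by (intro sets_pair_measure_cong) auto
    finally show "sets (bind Zs (\<lambda>zt. distr Us (count_space UNIV \<Otimes>\<^sub>M Zs) (\<lambda>u. (u i, zt)))) = sets (Bh \<Otimes>\<^sub>M Zs)" .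
    fix C assume "C \<in> sets (bind Zs (\<lambda>zt. distr Us (count_space UNIV \<Otimes>\<^sub>M Zs) (\<lambda>u. (u i, zt))))"
    then have C: "C \<in> sets (count_space UNIV \<Otimes>\<^sub>M Zs)" and C': "C \<in> sets (Bh \<Otimes>\<^sub>M Zs)"
      using \<open>sets _ = sets (count_space UNIV \<Otimes>\<^sub>M Zs)\<close> \<open>sets (count_space UNIV \<Otimes>\<^sub>M Zs) = sets (Bh \<Otimes>\<^sub>M Zs)\<close> by auto
    have "emeasure (bind Zs (\<lambda>zt. distr Us (count_space UNIV \<Otimes>\<^sub>M Zs) (\<lambda>u. (u i, zt)))) C
        = (\<integral>\<^sup>+zt. emeasure (distr Us (count_space UNIV \<Otimes>\<^sub>M Zs) (\<lambda>u. (u i, zt))) C \<partial>Zs)"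
      by (rule emeasure_bind[OF Zs_ne kern C])
    also have "\<dots> = (\<integral>\<^sup>+zt. emeasure Bh ((\<lambda>b. (b, zt)) -` C) \<partial>Zs)"
    proof (intro nn_integral_cong)
      fix zt assume zt: "zt \<in> space Zs"
      have m: "(\<lambda>u. (u i, zt)) \<in> measurable Us (count_space UNIV \<Otimes>\<^sub>M Zs)" using i zt by measurable
      have "emeasure (distr Us (count_space UNIV \<Otimes>\<^sub>M Zs) (\<lambda>u. (u i, zt))) C = emeasure Us ((\<lambda>u. (u i, zt)) -` C \<inter> space Us)"
        using m C by (rule emeasure_distr)
      also have "\<dots> = emeasure (distr Us (count_space UNIV) (\<lambda>u. u i)) ((\<lambda>b. (b, zt)) -` C)"
        using i by (subst emeasure_distr) (auto intro!: arg_cong2[where f=emeasure])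
      finally show "emeasure (distr Us (count_space UNIV \<Otimes>\<^sub>M Zs) (\<lambda>u. (u i, zt))) C = emeasure Bh ((\<lambda>b. (b, zt)) -` C)"
        using U_law_Us[OF i] by simp
    qed
    also have "\<dots> = emeasure (Bh \<Otimes>\<^sub>M Zs) C"
      using C' by (rule BZ.emeasure_pair_measure_alt2[symmetric])
    finally show "emeasure (bind Zs (\<lambda>zt. distr Us (count_space UNIV \<Otimes>\<^sub>M Zs) (\<lambda>u. (u i, zt)))) C = emeasure (Bh \<Otimes>\<^sub>M Zs) C" .
  qed
  then show ?thesis unfolding J U_law[OF i] Zd .
qed

definition Gk where "Gk s z = (\<integral>w. loss f lt w z \<partial>A s)"

lemma Gk_meas0: "(\<lambda>x. Gk (fst x) (snd x)) \<in> borel_measurable (PS \<Otimes>\<^sub>M \<mu>)"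
  unfolding Gk_def
proof (rule integral_measurable_kernel[where N=MW, OF _ _ MW_ne])
  show "(\<lambda>(x, y). loss f lt y (snd x)) \<in> borel_measurable ((PS \<Otimes>\<^sub>M \<mu>) \<Otimes>\<^sub>M MW)" by measurable
  show "(\<lambda>x. A (fst x)) \<in> measurable (PS \<Otimes>\<^sub>M \<mu>) (subprob_algebra MW)" by measurable
qed

lemma Gk_meas[measurable]:
  assumes "a \<in> measurable N PS" "b \<in> measurable N \<mu>"
  shows "(\<lambda>x. Gk (a x) (b x)) \<in> borel_measurable N"
  using measurable_compose[OF measurable_Pair[OF assms] Gk_meas0] by simp

lemma loss_bnd: "w \<in> space MW \<Longrightarrow> z \<in> space \<mu> \<Longrightarrow> 0 \<le> loss f lt w z \<and> loss f lt w z \<le> 1"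
  using loss_01 by blast

lemma loss_int: assumes s: "s \<in> space PS" and z: "z \<in> space \<mu>"
  shows "integrable (A s) (\<lambda>w. loss f lt w z)"
proof -
  interpret prob_space "A s" using A_prob s by blast
  show ?thesis
  proof (rule integrable_const_bound[where B=1])
    show "AE x in A s. norm (loss f lt x z) \<le> 1"
      using loss_bnd z by (intro AE_I2) (auto simp: space_A[OF s])
    show "(\<lambda>w. loss f lt w z) \<in> borel_measurable (A s)"
      using z by (simp add: measurable_cong_sets[OF sets_A[OF s] refl])
  qed
qed

lemma Gk_bnd: assumes s: "s \<in> space PS" and z: "z \<in> space \<mu>"
  shows "0 \<le> Gk s z" "Gk s z \<le> 1"
proof -
  interpret prob_space "A s" using A_prob s by blast
  show "0 \<le> Gk s z" unfolding Gk_def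
    using loss_bnd z by (intro integral_nonneg_AE AE_I2) (auto simp: space_A[OF s])
  have "Gk s z \<le> (\<integral>w. 1 \<partial>A s)" unfolding Gk_def
    using loss_bnd z loss_int[OF s z] by (intro integral_mono) (auto simp: space_A[OF s])
  then show "Gk s z \<le> 1" by (simp add: prob_space)
qed

end

context setting begin

lemma select_meas1[measurable]: "(\<lambda>zt. select n zt u) \<in> measurable Zs PS"
  unfolding select_def by (intro measurable_restrict) auto

definition "emp i = (\<integral>s. Gk s (s i) \<partial>PS)"
definition "popG = (\<integral>s. (\<integral>z. Gk s z \<partial>\<mu>) \<partial>PS)"
definition "T i u = (\<integral>zt. Gk (select n zt u) (zt (i, False)) \<partial>Zs)"

lemma space_PS_comp: "s \<in> space PS \<Longrightarrow> i < n \<Longrightarrow> s i \<in> space \<mu>"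
  by (auto simp: space_PiM)

lemma space_Zs_comp: "zt \<in> space Zs \<Longrightarrow> i < n \<Longrightarrow> zt (i, b) \<in> space \<mu>"
  by (auto simp: space_PiM zt_space_def)

lemma T_false:
  assumes i: "i < n" and ui: "u i = False"
  shows "T i u = emp i"
proof -
  have r: "distr Zs PS (\<lambda>zt. select n zt u) = PS"
  proof -
    have "distr (PiM ({..<n} \<times> UNIV) (\<lambda>_. \<mu>)) (PiM {..<n} (\<lambda>_. \<mu>)) (\<lambda>\<omega>. \<lambda>k\<in>{..<n}. \<omega> (k, u k)) = PiM {..<n} (\<lambda>_. \<mu>)"
      using distr_PiM_reindex[of "{..<n} \<times> UNIV" "\<lambda>_. \<mu>" "\<lambda>k. (k, u k)" "{..<n}"] mu
      by (auto simp: inj_on_def)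
    then show ?thesis unfolding zt_space_def select_def .
  qed
  have "T i u = (\<integral>zt. Gk (select n zt u) (select n zt u i) \<partial>Zs)"
    unfolding T_def using i ui by (intro Bochner_Integration.integral_cong) (auto simp: select_def)
  also have "\<dots> = (\<integral>s. Gk s (s i) \<partial>distr Zs PS (\<lambda>zt. select n zt u))"
    using i by (subst integral_distr) auto
  also have "\<dots> = emp i" unfolding r emp_def ..
  finally show ?thesis .
qed

lemma T_true:
  assumes i: "i < n" and ui: "u i = True"
  shows "T i u = popG"
proof -
  define I' where "I' = {..<Suc n}"
  define f' where "f' k = (if k < n then (k, u k) else (i, False))" for k
  have inj: "inj_on f' I'" using ui by (auto simp: inj_on_def f'_def I'_def split: if_splits)
  have fI: "f' \<in> I' \<rightarrow> {..<n} \<times> UNIV" using i by (auto simp: f'_def I'_def)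
  have r: "distr Zs (PiM I' (\<lambda>_. \<mu>)) (\<lambda>\<omega>. \<lambda>k\<in>I'. \<omega> (f' k)) = PiM I' (\<lambda>_. \<mu>)"
    using distr_PiM_reindex[of "{..<n} \<times> UNIV" "\<lambda>_. \<mu>" f' I'] mu inj fI
    unfolding zt_space_def by auto
  have mt: "(\<lambda>\<omega>. \<lambda>k\<in>I'. \<omega> (f' k)) \<in> measurable Zs (PiM I' (\<lambda>_. \<mu>))"
  proof (intro measurable_restrict)
    fix k assume "k \<in> I'"
    then have "fst (f' k) < n" using i by (auto simp: f'_def)
    then show "(\<lambda>\<omega>. \<omega> (f' k)) \<in> measurable Zs \<mu>"
      using zt_comp[of "fst (f' k)" "snd (f' k)"] by simp
  qed
  define G3 where "G3 Y = Gk (restrict Y {..<n}) (Y n)" for Y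
  have G3m: "G3 \<in> borel_measurable (PiM I' (\<lambda>_. \<mu>))"
    unfolding G3_def I'_def
    by (intro Gk_meas measurable_restrict_subset measurable_component_singleton) auto
  have "T i u = (\<integral>zt. G3 (\<lambda>k\<in>I'. zt (f' k)) \<partial>Zs)"
    unfolding T_def
  proof (intro Bochner_Integration.integral_cong refl)
    fix zt :: "nat \<times> bool \<Rightarrow> 'x \<times> 'y"
    have "restrict (\<lambda>k\<in>I'. zt (f' k)) {..<n} = select n zt u"
      by (auto simp: select_def f'_def I'_def restrict_def fun_eq_iff)
    moreover have "(\<lambda>k\<in>I'. zt (f' k)) n = zt (i, False)" by (simp add: I'_def f'_def)
    ultimately show "Gk (select n zt u) (zt (i, False)) = G3 (\<lambda>k\<in>I'. zt (f' k))"
      by (simp add: G3_def)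
  qed
  also have "\<dots> = (\<integral>Y. G3 Y \<partial>distr Zs (PiM I' (\<lambda>_. \<mu>)) (\<lambda>\<omega>. \<lambda>k\<in>I'. \<omega> (f' k)))"
    using mt G3m by (subst integral_distr) auto
  also have "\<dots> = (\<integral>Y. G3 Y \<partial>PiM (insert n {..<n}) (\<lambda>_. \<mu>))"
    by (subst r) (simp add: I'_def lessThan_Suc)
  also have "\<dots> = (\<integral>Y. G3 Y \<partial>distr (\<mu> \<Otimes>\<^sub>M PS) (PiM (insert n {..<n}) (\<lambda>_. \<mu>)) (\<lambda>(x, X). X(n := x)))"
    using distr_pair_PiM_eq_PiM[of "{..<n}" "\<lambda>_. \<mu>" n] mu by simp
  also have "\<dots> = (\<integral>(x, X). G3 (X(n := x)) \<partial>(\<mu> \<Otimes>\<^sub>M PS))"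
  proof (subst integral_distr)
    show "(\<lambda>(x, X). X(n := x)) \<in> measurable (\<mu> \<Otimes>\<^sub>M PS) (PiM (insert n {..<n}) (\<lambda>_. \<mu>))"
      by measurable
    show "G3 \<in> borel_measurable (PiM (insert n {..<n}) (\<lambda>_. \<mu>))"
      using G3m unfolding I'_def lessThan_Suc .
  qed (simp add: split_beta')
  also have "\<dots> = (\<integral>(x, X). Gk X x \<partial>(\<mu> \<Otimes>\<^sub>M PS))"
  proof (intro Bochner_Integration.integral_cong refl)
    fix z assume "z \<in> space (\<mu> \<Otimes>\<^sub>M PS)"
    then obtain x X where z: "z = (x, X)" and X: "X \<in> space PS" by (auto simp: space_pair_measure)
    have "restrict (X(n := x)) {..<n} = X"
      using X by (auto simp: space_PiM restrict_def fun_eq_iff PiE_def extensional_def)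
    then show "(case z of (x, X) \<Rightarrow> G3 (X(n := x))) = (case z of (x, X) \<Rightarrow> Gk X x)"
      by (simp add: z G3_def)
  qed
  also have "\<dots> = popG"
  proof -
    interpret M: prob_space \<mu> by (rule mu)
    interpret P: prob_space PS by (rule PS_prob)
    interpret MP: pair_prob_space \<mu> PS ..
    have "integrable (\<mu> \<Otimes>\<^sub>M PS) (\<lambda>(x, X). Gk X x)"
    proof (rule MP.P.integrable_const_bound[where B=1])
      show "AE z in \<mu> \<Otimes>\<^sub>M PS. norm (case z of (x, X) \<Rightarrow> Gk X x) \<le> 1"
      proof (intro AE_I2)
        fix z assume "z \<in> space (\<mu> \<Otimes>\<^sub>M PS)"
        then obtain x X where z: "z = (x, X)" "x \<in> space \<mu>" "X \<in> space PS" by (auto simp: space_pair_measure)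
        show "norm (case z of (x, X) \<Rightarrow> Gk X x) \<le> 1" using Gk_bnd[OF z(3,2)] z(1) by simp
      qed
      show "(\<lambda>(x, X). Gk X x) \<in> borel_measurable (\<mu> \<Otimes>\<^sub>M PS)" by measurable
    qed
    then show ?thesis unfolding popG_def by (subst MP.integral_snd[symmetric]) auto
  qed
  finally show ?thesis .
qed

lemma pop_eq: "pop_risk n \<mu> A f lt = popG"
  unfolding pop_risk_def popG_def
proof (intro Bochner_Integration.integral_cong refl)
  fix s assume s: "s \<in> space PS"
  interpret M: prob_space \<mu> by (rule mu)
  interpret AS: prob_space "A s" using A_prob s by blast
  interpret AM: pair_prob_space "A s" \<mu> ..
  have "integrable (A s \<Otimes>\<^sub>M \<mu>) (\<lambda>(w, z). loss f lt w z)"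
  proof (rule AM.P.integrable_const_bound[where B=1])
    show "AE x in A s \<Otimes>\<^sub>M \<mu>. norm (case x of (w, z) \<Rightarrow> loss f lt w z) \<le> 1"
      using loss_bnd by (intro AE_I2) (auto simp: space_pair_measure space_A[OF s])
    have "(\<lambda>(w, z). loss f lt w z) \<in> borel_measurable (MW \<Otimes>\<^sub>M \<mu>)" by measurable
    then show "(\<lambda>(w, z). loss f lt w z) \<in> borel_measurable (A s \<Otimes>\<^sub>M \<mu>)"
      by (simp add: measurable_cong_sets[OF sets_pair_measure_cong[OF sets_A[OF s] refl] refl])
  qed
  then have "(\<integral>z. (\<integral>w. loss f lt w z \<partial>A s) \<partial>\<mu>) = (\<integral>w. (\<integral>z. loss f lt w z \<partial>\<mu>) \<partial>A s)"
    by (rule AM.Fubini_integral)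
  then show "(\<integral>w. (\<integral>z. loss f lt w z \<partial>\<mu>) \<partial>A s) = (\<integral>z. Gk s z \<partial>\<mu>)"
    unfolding Gk_def by simp
qed

end

context setting begin

definition "Dq i = (\<integral>\<omega>. ((\<lambda>(zt, u, w). loss f lt w (zt (i, False))) \<omega> - 1/2) * sgnb ((\<lambda>(zt, u, w). u i) \<omega>) \<partial>SS)"

lemma Gsel_int: "i < n \<Longrightarrow> integrable Zs (\<lambda>zt. Gk (select n zt u) (zt (i, False)))"
proof -
  assume i: "i < n"
  interpret Z: prob_space Zs by (rule Zs_prob)
  show ?thesis
  proof (rule Z.integrable_const_bound[where B=1])
    show "AE zt in Zs. norm (Gk (select n zt u) (zt (i, False))) \<le> 1"
      using Gk_bnd[OF select_space space_Zs_comp] i by (intro AE_I2) auto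
    show "(\<lambda>zt. Gk (select n zt u) (zt (i, False))) \<in> borel_measurable Zs" using i by measurable
  qed
qed

lemma D_eq:
  assumes i: "i < n"
  shows "Dq i = (popG - emp i) / 2"
proof -
  interpret Z: prob_space Zs by (rule Zs_prob)
  interpret U: prob_space Us by (rule Us_prob)
  interpret ZU: pair_prob_space Zs Us ..
  define \<Phi> where "\<Phi> zt u = sgnb (u i) * (Gk (select n zt u) (zt (i, False)) - 1/2)" for zt u
  have "Dq i = (\<integral>zt. (\<integral>u. (\<integral>w. (loss f lt w (zt (i, False)) - 1/2) * sgnb (u i) \<partial>A (select n zt u)) \<partial>Us) \<partial>Zs)"
    unfolding Dq_def
  proof (subst SS_integral[where B="1/2"])
    show "(\<lambda>\<omega>. ((\<lambda>(zt, u, w). loss f lt w (zt (i, False))) \<omega> - 1/2) * sgnb ((\<lambda>(zt, u, w). u i) \<omega>)) \<in> borel_measurable \<Omega>"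
      using i unfolding sgnb_def by measurable
    fix x assume "x \<in> space \<Omega>"
    then obtain zt u w where x: "x = (zt, u, w)" "zt \<in> space Zs" "w \<in> space MW"
      by (auto simp: space_pair_measure)
    have "0 \<le> loss f lt w (zt (i, False)) \<and> loss f lt w (zt (i, False)) \<le> 1"
      using loss_bnd[OF x(3) space_Zs_comp[OF x(2) i]] .
    then show "\<bar>((\<lambda>(zt, u, w). loss f lt w (zt (i, False))) x - 1/2) * sgnb ((\<lambda>(zt, u, w). u i) x)\<bar> \<le> 1/2"
      unfolding x by (auto simp: abs_mult split: abs_split)
  qed simp
  also have "\<dots> = (\<integral>zt. (\<integral>u. \<Phi> zt u \<partial>Us) \<partial>Zs)"
  proof (intro Bochner_Integration.integral_cong refl)
    fix zt u assume zt: "zt \<in> space Zs" and u: "u \<in> space Us"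
    have s: "select n zt u \<in> space PS" using zt by (rule select_space)
    interpret AS: prob_space "A (select n zt u)" using A_prob s by blast
    have "(\<integral>w. (loss f lt w (zt (i, False)) - 1/2) * sgnb (u i) \<partial>A (select n zt u))
        = (\<integral>w. loss f lt w (zt (i, False)) - 1/2 \<partial>A (select n zt u)) * sgnb (u i)"
      by (rule integral_mult_left_zero)
    also have "(\<integral>w. loss f lt w (zt (i, False)) - 1/2 \<partial>A (select n zt u)) = Gk (select n zt u) (zt (i, False)) - 1/2"
      unfolding Gk_def using loss_int[OF s space_Zs_comp[OF zt i]]
      by (subst Bochner_Integration.integral_diff) (auto simp: AS.prob_space)
    finally show "(\<integral>w. (loss f lt w (zt (i, False)) - 1/2) * sgnb (u i) \<partial>A (select n zt u)) = \<Phi> zt u"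
      by (simp add: \<Phi>_def mult.commute)
  qed
  also have "\<dots> = (\<integral>u. (\<integral>zt. \<Phi> zt u \<partial>Zs) \<partial>Us)"
  proof (rule ZU.Fubini_integral[symmetric])
    show "integrable (Zs \<Otimes>\<^sub>M Us) (\<lambda>(zt, u). \<Phi> zt u)"
    proof (rule ZU.P.integrable_const_bound[where B=1])
      show "AE x in Zs \<Otimes>\<^sub>M Us. norm (case x of (zt, u) \<Rightarrow> \<Phi> zt u) \<le> 1"
      proof (intro AE_I2)
        fix x assume "x \<in> space (Zs \<Otimes>\<^sub>M Us)"
        then obtain zt u where x: "x = (zt, u)" "zt \<in> space Zs" by (auto simp: space_pair_measure)
        have "0 \<le> Gk (select n zt u) (zt (i, False))" "Gk (select n zt u) (zt (i, False)) \<le> 1"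
          using Gk_bnd[OF select_space[OF x(2)] space_Zs_comp[OF x(2) i]] by auto
        then show "norm (case x of (zt, u) \<Rightarrow> \<Phi> zt u) \<le> 1"
          unfolding x \<Phi>_def by (auto simp: abs_mult split: abs_split)
      qed
      have "(\<lambda>x. sgnb (snd x i) * (Gk (select n (fst x) (snd x)) (fst x (i, False)) - 1/2)) \<in> borel_measurable (Zs \<Otimes>\<^sub>M Us)"
        using i unfolding sgnb_def by measurable
      then show "(\<lambda>(zt, u). \<Phi> zt u) \<in> borel_measurable (Zs \<Otimes>\<^sub>M Us)"
        by (simp add: \<Phi>_def split_beta')
    qed
  qed
  also have "\<dots> = (\<integral>u. sgnb (u i) * ((if u i then popG else emp i) - 1/2) \<partial>Us)"
  proof (intro Bochner_Integration.integral_cong refl)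
    fix u
    have "(\<integral>zt. \<Phi> zt u \<partial>Zs) = sgnb (u i) * (\<integral>zt. Gk (select n zt u) (zt (i, False)) - 1/2 \<partial>Zs)"
      unfolding \<Phi>_def by (rule integral_mult_right_zero)
    also have "(\<integral>zt. Gk (select n zt u) (zt (i, False)) - 1/2 \<partial>Zs) = T i u - 1/2"
      unfolding T_def using Gsel_int[OF i] by (subst Bochner_Integration.integral_diff) (auto simp: Z.prob_space)
    also have "T i u = (if u i then popG else emp i)"
      using T_true[OF i] T_false[OF i] by (cases "u i") auto
    finally show "(\<integral>zt. \<Phi> zt u \<partial>Zs) = sgnb (u i) * ((if u i then popG else emp i) - 1/2)" .
  qed
  also have "\<dots> = (\<integral>b. sgnb b * ((if b then popG else emp i) - 1/2) \<partial>distr Us (count_space UNIV) (\<lambda>u. u i))"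
    by (subst integral_distr) (auto simp: i)
  also have "\<dots> = (popG - emp i) / 2"
    unfolding U_law_Us[OF i] by (simp add: sgnb_def field_simps)
  finally show ?thesis .
qed

lemma emp_int: "i < n \<Longrightarrow> integrable PS (\<lambda>s. Gk s (s i))"
proof -
  assume i: "i < n"
  interpret P: prob_space PS by (rule PS_prob)
  show ?thesis
  proof (rule P.integrable_const_bound[where B=1])
    show "AE s in PS. norm (Gk s (s i)) \<le> 1"
      using Gk_bnd[OF _ space_PS_comp] i by (intro AE_I2) auto
    have "(\<lambda>s. s i) \<in> measurable PS \<mu>" using i by (intro measurable_component_singleton) auto
    then show "(\<lambda>s. Gk s (s i)) \<in> borel_measurable PS"
      by (rule Gk_meas[OF measurable_ident_sets[OF refl]])
  qed
qed

lemma gen_err_eq: "gen_err n \<mu> A f lt = 2 / real n * (\<Sum>i<n. Dq i)"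
proof -
  have "emp_risk n \<mu> A f lt = (\<integral>s. (1 / real n) * (\<Sum>i<n. Gk s (s i)) \<partial>PS)"
    unfolding emp_risk_def
  proof (intro Bochner_Integration.integral_cong refl)
    fix s assume s: "s \<in> space PS"
    show "(\<integral>w. 1 / real n * (\<Sum>i<n. loss f lt w (s i)) \<partial>A s) = 1 / real n * (\<Sum>i<n. Gk s (s i))"
    proof -
      have "(\<integral>w. (\<Sum>i<n. loss f lt w (s i)) \<partial>A s) = (\<Sum>i<n. \<integral>w. loss f lt w (s i) \<partial>A s)"
        by (rule Bochner_Integration.integral_sum) (use loss_int[OF s space_PS_comp[OF s]] in auto)
      then show ?thesis unfolding Gk_def by (subst integral_mult_right_zero) simp
    qed
  qed
  also have "\<dots> = (1 / real n) * (\<Sum>i<n. emp i)"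
  proof -
    have "(\<integral>s. (\<Sum>i<n. Gk s (s i)) \<partial>PS) = (\<Sum>i<n. \<integral>s. Gk s (s i) \<partial>PS)"
      by (rule Bochner_Integration.integral_sum) (use emp_int in auto)
    then show ?thesis unfolding emp_def by (subst integral_mult_right_zero) simp
  qed
  finally have E: "emp_risk n \<mu> A f lt = (1 / real n) * (\<Sum>i<n. emp i)" .
  have "2 / real n * (\<Sum>i<n. Dq i) = 2 / real n * (\<Sum>i<n. (popG - emp i) / 2)"
    by (simp add: D_eq)
  also have "\<dots> = (1 / real n) * (real n * popG - (\<Sum>i<n. emp i))"
    using n_pos by (simp add: sum_divide_distrib[symmetric] sum_subtractf field_simps)
  also have "\<dots> = popG - (1 / real n) * (\<Sum>i<n. emp i)"
    using n_pos by (simp add: field_simps)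
  finally show ?thesis unfolding gen_err_def pop_eq E by simp
qed

end

context setting begin

lemma fst_comp[measurable]: "i < n \<Longrightarrow> (\<lambda>zt. fst (zt (i, b))) \<in> measurable Zs MX"
  by (rule measurable_compose[OF zt_comp fst_meas_mu])
lemma snd_comp[measurable]: "i < n \<Longrightarrow> (\<lambda>zt. snd (zt (i, b))) \<in> measurable Zs MY"
  by (rule measurable_compose[OF zt_comp snd_meas_mu])

lemma per_i:
  assumes i: "i < n"
  shows "(Dq i)\<^sup>2 \<le> prob_space.mutual_information SS (exp 1) borel (count_space UNIV)
              (\<lambda>(zt, u, w). loss f lt w (zt (i, False))) (\<lambda>(zt, u, w). u i)"
    and "prob_space.mutual_information SS (exp 1) borel (count_space UNIV)
              (\<lambda>(zt, u, w). loss f lt w (zt (i, False))) (\<lambda>(zt, u, w). u i)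
         \<le> prob_space.conditional_mutual_information SS (exp 1)
              (count_space UNIV) MP Zs
              (\<lambda>(zt, u, w). u i)
              (\<lambda>(zt, u, w). f w (fst (zt (i, False))))
              (\<lambda>(zt, u, w). zt)"
proof -
  have L: "(\<lambda>(zt, u, w). loss f lt w (zt (i, False))) \<in> borel_measurable SS"
    unfolding meas_SS using i by measurable
  have Y: "(\<lambda>(zt, u, w). u i) \<in> measurable SS (count_space UNIV)"
    unfolding meas_SS using i by measurable
  have L01: "0 \<le> (\<lambda>(zt, u, w). loss f lt w (zt (i, False))) \<omega> \<and> (\<lambda>(zt, u, w). loss f lt w (zt (i, False))) \<omega> \<le> 1"
    if "\<omega> \<in> space SS" for \<omega>
  proof -
    have "\<omega> \<in> space \<Omega>" using that space_SS by simp
    then obtain zt u w where x: "\<omega> = (zt, u, w)" "zt \<in> space Zs" "w \<in> space MW"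
      by (auto simp: space_pair_measure)
    show ?thesis unfolding x using loss_bnd[OF x(3) space_Zs_comp[OF x(2) i]] by simp
  qed
  show "(Dq i)\<^sup>2 \<le> prob_space.mutual_information SS (exp 1) borel (count_space UNIV)
              (\<lambda>(zt, u, w). loss f lt w (zt (i, False))) (\<lambda>(zt, u, w). u i)"
    unfolding Dq_def by (rule MI_lower[OF SS_prob L L01 Y U_law[OF i]])
  have V: "(\<lambda>x. ((\<lambda>(zt, u, w). f w (fst (zt (i, False)))) x, (\<lambda>(zt, u, w). zt) x)) \<in> measurable SS (MP \<Otimes>\<^sub>M Zs)"
    unfolding meas_SS using i by measurable
  have h: "(\<lambda>(p, zt). lt p (snd (zt (i, False)))) \<in> borel_measurable (MP \<Otimes>\<^sub>M Zs)"
    using i by measurable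
  have Z: "(\<lambda>(zt, u, w). zt) \<in> measurable SS Zs"
    unfolding meas_SS by measurable
  have dpi: "prob_space.mutual_information SS (exp 1) borel (count_space UNIV)
              (\<lambda>(zt, u, w). loss f lt w (zt (i, False))) (\<lambda>(zt, u, w). u i)
      \<le> prob_space.mutual_information SS (exp 1) (count_space UNIV) (MP \<Otimes>\<^sub>M Zs) (\<lambda>(zt, u, w). u i)
           (\<lambda>x. ((\<lambda>(zt, u, w). f w (fst (zt (i, False)))) x, (\<lambda>(zt, u, w). zt) x))"
    by (rule MI_dpi[OF SS_prob V Y U_law[OF i] h L]) (auto simp: loss_def)
  have z: "prob_space.mutual_information SS (exp 1) (count_space UNIV) Zs (\<lambda>(zt, u, w). u i) (\<lambda>(zt, u, w). zt) = 0"
  proof (rule MI_indep_zero[OF SS_prob Y Z])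
    show "distr SS (count_space UNIV \<Otimes>\<^sub>M Zs) (\<lambda>\<omega>. ((\<lambda>(zt, u, w). u i) \<omega>, (\<lambda>(zt, u, w). zt) \<omega>)) =
      distr SS (count_space UNIV) (\<lambda>(zt, u, w). u i) \<Otimes>\<^sub>M distr SS Zs (\<lambda>(zt, u, w). zt)"
      using UZ_indep[OF i] by (simp add: split_beta')
  qed
  show "prob_space.mutual_information SS (exp 1) borel (count_space UNIV)
              (\<lambda>(zt, u, w). loss f lt w (zt (i, False))) (\<lambda>(zt, u, w). u i)
         \<le> prob_space.conditional_mutual_information SS (exp 1)
              (count_space UNIV) MP Zs
              (\<lambda>(zt, u, w). u i)
              (\<lambda>(zt, u, w). f w (fst (zt (i, False))))
              (\<lambda>(zt, u, w). zt)"
    unfolding prob_space.conditional_mutual_information_def[OF SS_prob] z using dpi by simp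
qed

lemma main:
  shows
    "\<bar>gen_err n \<mu> A f lt\<bar>
       \<le> 2 / real n * (\<Sum>i<n. sqrt (2 *
            prob_space.mutual_information (supersample n \<mu> MW A) (exp 1)
              borel (count_space UNIV)
              (\<lambda>(zt, u, w). loss f lt w (zt (i, False)))
              (\<lambda>(zt, u, w). u i)))
     \<and> 2 / real n * (\<Sum>i<n. sqrt (2 *
            prob_space.mutual_information (supersample n \<mu> MW A) (exp 1)
              borel (count_space UNIV)
              (\<lambda>(zt, u, w). loss f lt w (zt (i, False)))
              (\<lambda>(zt, u, w). u i)))
       \<le> 2 / real n * (\<Sum>i<n. sqrt (2 *
            prob_space.conditional_mutual_information (supersample n \<mu> MW A) (exp 1)
              (count_space UNIV) MP (zt_space n \<mu>)
              (\<lambda>(zt, u, w). u i)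
              (\<lambda>(zt, u, w). f w (fst (zt (i, False))))
              (\<lambda>(zt, u, w). zt)))"
    (is "?A \<and> ?B")
proof
  let ?MI = "\<lambda>i. prob_space.mutual_information SS (exp 1) borel (count_space UNIV)
              (\<lambda>(zt, u, w). loss f lt w (zt (i, False))) (\<lambda>(zt, u, w). u i)"
  have c: "0 \<le> 2 / real n" by simp
  have "\<bar>gen_err n \<mu> A f lt\<bar> = 2 / real n * \<bar>\<Sum>i<n. Dq i\<bar>"
    unfolding gen_err_eq by (simp add: abs_mult)
  also have "\<dots> \<le> 2 / real n * (\<Sum>i<n. \<bar>Dq i\<bar>)"
    by (intro mult_left_mono c sum_abs)
  also have "\<dots> \<le> 2 / real n * (\<Sum>i<n. sqrt (2 * ?MI i))"
  proof (intro mult_left_mono c sum_mono)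
    fix i assume "i \<in> {..<n}"
    then have i: "i < n" by simp
    have "\<bar>Dq i\<bar> = sqrt ((Dq i)\<^sup>2)" by simp
    also have "\<dots> \<le> sqrt (?MI i)" using per_i(1)[OF i] by (rule real_sqrt_le_mono)
    also have "\<dots> \<le> sqrt (2 * ?MI i)"
      using per_i(1)[OF i] by (intro real_sqrt_le_mono) (use zero_le_power2[of "Dq i"] in linarith)
    finally show "\<bar>Dq i\<bar> \<le> sqrt (2 * ?MI i)" .
  qed
  finally show ?A .
  show ?B
  proof (intro mult_left_mono c sum_mono)
    fix i assume "i \<in> {..<n}"
    then show "sqrt (2 * ?MI i) \<le> sqrt (2 * prob_space.conditional_mutual_information SS (exp 1)
              (count_space UNIV) MP Zs (\<lambda>(zt, u, w). u i)
              (\<lambda>(zt, u, w). f w (fst (zt (i, False)))) (\<lambda>(zt, u, w). zt))"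
      using per_i(2)[of i] by simp
  qed
qed

end

theorem theorem6:
  fixes n :: nat
    and \<mu> :: "('x \<times> 'y) measure"
    and MX :: "'x measure" and MY :: "'y measure"
    and MW :: "'w measure" and MP :: "'p measure"
    and A :: "(nat \<Rightarrow> 'x \<times> 'y) \<Rightarrow> 'w measure"
    and f :: "'w \<Rightarrow> 'x \<Rightarrow> 'p"
    and lt :: "'p \<Rightarrow> 'y \<Rightarrow> real"
  assumes n_pos: "0 < n"
    and mu_prob: "prob_space \<mu>"
    and mu_sets: "sets \<mu> = sets (MX \<Otimes>\<^sub>M MY)"
    and f_meas: "(\<lambda>(w, x). f w x) \<in> measurable (MW \<Otimes>\<^sub>M MX) MP"
    and lt_meas: "(\<lambda>(p, y). lt p y) \<in> borel_measurable (MP \<Otimes>\<^sub>M MY)"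
    and A_kernel: "A \<in> measurable (PiM {..<n} (\<lambda>_. \<mu>)) (subprob_algebra MW)"
    and A_prob: "\<forall>s \<in> space (PiM {..<n} (\<lambda>_. \<mu>)). prob_space (A s)"
    and loss_01: "\<forall>w \<in> space MW. \<forall>z \<in> space \<mu>. 0 \<le> loss f lt w z \<and> loss f lt w z \<le> 1"
  shows
    "\<bar>gen_err n \<mu> A f lt\<bar>
       \<le> 2 / real n * (\<Sum>i<n. sqrt (2 *
            prob_space.mutual_information (supersample n \<mu> MW A) (exp 1)
              borel (count_space UNIV)
              (\<lambda>(zt, u, w). loss f lt w (zt (i, False)))
              (\<lambda>(zt, u, w). u i)))
     \<and> 2 / real n * (\<Sum>i<n. sqrt (2 *
            prob_space.mutual_information (supersample n \<mu> MW A) (exp 1)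
              borel (count_space UNIV)
              (\<lambda>(zt, u, w). loss f lt w (zt (i, False)))
              (\<lambda>(zt, u, w). u i)))
       \<le> 2 / real n * (\<Sum>i<n. sqrt (2 *
            prob_space.conditional_mutual_information (supersample n \<mu> MW A) (exp 1)
              (count_space UNIV) MP (zt_space n \<mu>)
              (\<lambda>(zt, u, w). u i)
              (\<lambda>(zt, u, w). f w (fst (zt (i, False))))
              (\<lambda>(zt, u, w). zt)))"
proof -
  interpret setting n \<mu> MX MY MW MP A f lt
    using assms unfolding setting_def by blast
  show ?thesis by (rule main)
qed

end
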